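(* Let $q$ be a root of unity. A point $z=(z_0,z_1,z_\infty,\vec w)\in\mathcal Z$ is a singular point of $\mathcal Z$ if and only if one of the following holds: (1) there exist $i\in\{1,2,3,4\}$ and a representation $r:\pi_1(\Sigma_{0,4})\to SL_2(\mathbb C)$ with $r(p_i)=\pm I$ such that $z$ is a character of $r$ and $w_i\ne\pm2$; (2) $z$ is a character of a reducible representation $r:\pi_1(\Sigma_{0,4})\to SL_2(\mathbb C)$.
   Context: $\mathcal S_q(\Sigma_{0,4})$ is the Kauffman bracket skein algebra of the four-punctured sphere (punctures numbered 1–4, peripheral curves $p_i$, and curves $\alpha_0,\alpha_1,\alpha_\infty$ separating the punctures as $\{1,2\}|\{3,4\}$, $\{1,3\}|\{2,4\}$, $\{1,4\}|\{2,3\}$). For $q$ a root of unity, $N=\mathrm{ord}(q^4)$, $\epsilon=q^{N^2}$, $T_N$ the Chebyshev polynomial ($T_N(t+t^{-1})=t^N+t^{-N}$). With $A_m=\epsilon^2T_N(\alpha_m)$, $P_i=T_N(p_i)$, $C_0=P_1P_2+P_3P_4$, $C_1=P_1P_3+P_2P_4$, $C_\infty=P_1P_4+P_2P_3$, $\Gamma=P_1P_2P_3P_4+\sum_iP_i^2$ and $H(x,y,z;a,b,c,g)=x^2+y^2+z^2-xzy+ax+by+cz+g$, the center of $\mathcal S_q(\Sigma_{0,4})$ is generated by $A_0,A_1,A_\infty,p_1,\dots,p_4$ with the single relation $H(A_0,A_1,A_\infty;C_0,C_1,C_\infty,\Gamma)=4$, and $\mathcal Z$ is the corresponding hypersurface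 in $\mathbb C^7$ with coordinates $(z_0,z_1,z_\infty,w_1,\dots,w_4)$. Write $W_i=T_N(w_i)$. Loops $p_1,\dots,p_4\in\pi_1(\Sigma_{0,4})$ around the punctures satisfy $p_1p_2p_3p_4=1$, with $p_1p_2,p_1p_3,p_2p_3$ representing $\alpha_0,\alpha_1,\alpha_\infty$. A point $z\in\mathcal Z$ is a character of $r:\pi_1(\Sigma_{0,4})\to SL_2(\mathbb C)$ if $z_0=-\mathrm{tr}\,r(p_1p_2)$, $z_1=-\mathrm{tr}\,r(p_1p_3)$, $z_\infty=-\mathrm{tr}\,r(p_2p_3)$ and $W_i=-\mathrm{tr}\,r(p_i)$ for all $i$. *)

theory Defs
  imports "HOL-Analysis.Analysis"
begin

text \<open>Chebyshev polynomial T_n with T_n(t + 1/t) = t^n + t^(-n).\<close>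
fun cheb :: "nat \<Rightarrow> complex \<Rightarrow> complex" where
  "cheb 0 x = 2"
| "cheb (Suc 0) x = x"
| "cheb (Suc (Suc n)) x = x * cheb (Suc n) x - cheb n x"

definition root_of_unity :: "complex \<Rightarrow> bool" where
  "root_of_unity q \<longleftrightarrow> (\<exists>n::nat. n > 0 \<and> q ^ n = 1)"

definition ordN :: "complex \<Rightarrow> nat" where
  "ordN q = (LEAST k::nat. k > 0 \<and> (q ^ 4) ^ k = 1)"

definition Hpoly :: "complex \<Rightarrow> complex \<Rightarrow> complex \<Rightarrow> complex \<Rightarrow> complex \<Rightarrow> complex \<Rightarrow> complex \<Rightarrow> complex" where
  "Hpoly x y z a b c g = x^2 + y^2 + z^2 - x*z*y + a*x + b*y + c*z + g"

text \<open>Defining function F of the hypersurface Z in C^7: F = H(z0,z1,zinf;C0,C1,Cinf,Gamma) - 4,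
  with W_i = T_N(w_i); the w-coordinates are w 1, ..., w 4.\<close>
definition Zfun :: "nat \<Rightarrow> complex \<Rightarrow> complex \<Rightarrow> complex \<Rightarrow> (nat \<Rightarrow> complex) \<Rightarrow> complex" where
  "Zfun N z0 z1 zi w =
     (let W = (\<lambda>i. cheb N (w i)) in
      Hpoly z0 z1 zi (W 1 * W 2 + W 3 * W 4) (W 1 * W 3 + W 2 * W 4) (W 1 * W 4 + W 2 * W 3)
        (W 1 * W 2 * W 3 * W 4 + W 1 ^ 2 + W 2 ^ 2 + W 3 ^ 2 + W 4 ^ 2) - 4)"

definition inZ :: "nat \<Rightarrow> complex \<Rightarrow> complex \<Rightarrow> complex \<Rightarrow> (nat \<Rightarrow> complex) \<Rightarrow> bool" where
  "inZ N z0 z1 zi w \<longleftrightarrow> Zfun N z0 z1 zi w = 0"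

definition singular_Z :: "nat \<Rightarrow> complex \<Rightarrow> complex \<Rightarrow> complex \<Rightarrow> (nat \<Rightarrow> complex) \<Rightarrow> bool" where
  "singular_Z N z0 z1 zi w \<longleftrightarrow> inZ N z0 z1 zi w
     \<and> ((\<lambda>t. Zfun N t z1 zi w) has_field_derivative 0) (at z0)
     \<and> ((\<lambda>t. Zfun N z0 t zi w) has_field_derivative 0) (at z1)
     \<and> ((\<lambda>t. Zfun N z0 z1 t w) has_field_derivative 0) (at zi)
     \<and> (\<forall>i\<in>{1..4}. ((\<lambda>t. Zfun N z0 z1 zi (w(i := t))) has_field_derivative 0) (at (w i)))"

type_synonym mat2 = "complex ^ 2 ^ 2"

definition tr2 :: "mat2 \<Rightarrow> complex" where
  "tr2 A = A $ 1 $ 1 + A $ 2 $ 2"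

text \<open>A representation r : pi_1(Sigma_{0,4}) -> SL_2(C), pi_1 = < p1,p2,p3,p4 | p1 p2 p3 p4 = 1 >,
  is given by the images M 1, ..., M 4 of the peripheral loops.\<close>
definition is_rep :: "(nat \<Rightarrow> mat2) \<Rightarrow> bool" where
  "is_rep M \<longleftrightarrow> (\<forall>i\<in>{1..4}. det (M i) = 1) \<and> M 1 ** M 2 ** M 3 ** M 4 = mat 1"

definition reducible_rep :: "(nat \<Rightarrow> mat2) \<Rightarrow> bool" where
  "reducible_rep M \<longleftrightarrow> (\<exists>v::complex^2. v \<noteq> 0 \<and> (\<forall>i\<in>{1..4}. \<exists>c. M i *v v = c *s v))"

definition character_of :: "nat \<Rightarrow> complex \<Rightarrow> complex \<Rightarrow> complex \<Rightarrow> (nat \<Rightarrow> complex) \<Rightarrow> (nat \<Rightarrow> mat2) \<Rightarrow> bool" where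
  "character_of N z0 z1 zi w M \<longleftrightarrow>
     z0 = - tr2 (M 1 ** M 2) \<and> z1 = - tr2 (M 1 ** M 3) \<and> zi = - tr2 (M 2 ** M 3)
     \<and> (\<forall>i\<in>{1..4}. cheb N (w i) = - tr2 (M i))"

end

theory Submission
  imports Defs
begin


definition kap :: "complex \<Rightarrow> complex \<Rightarrow> complex \<Rightarrow> complex" where
 "kap u v t = u^2 + v^2 + t^2 - u * v * t - 4"

definition Fp :: "complex \<Rightarrow> complex \<Rightarrow> complex \<Rightarrow> complex \<Rightarrow> complex \<Rightarrow> complex \<Rightarrow> complex \<Rightarrow> complex" where
 "Fp a b c d x y z = x^2+y^2+z^2+x*y*z - (a*b+c*d)*x - (a*c+b*d)*y - (a*d+b*c)*z + a*b*c*d + a^2+b^2+c^2+d^2 - 4"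
definition "Fx a b c d x y z = 2*x + y*z - (a*b+c*d)"
definition "Fy a b c d x y z = 2*y + x*z - (a*c+b*d)"
definition "Fz a b c d x y z = 2*z + x*y - (a*d+b*c)"
definition "Fa a b c d x y z = 2*a - b*x - c*y - d*z + b*c*(d::complex)"

lemma idK: "(4 - x^2) * Fp a b c d x y z = - kap a b x * kap c d x + (Fy a b c d x y z)^2 + (Fz a b c d x y z)^2 - x * Fy a b c d x y z * Fz a b c d x y z"
  unfolding Fp_def kap_def Fy_def Fz_def by algebra

lemma ex_inv: "\<exists>t::complex. t \<noteq> 0 \<and> w = t + 1/t"
proof -
  define s where "s = csqrt (w^2 - 4)"
  have s2: "s^2 = w^2 - 4" unfolding s_def by simp
  define t where "t = (w + s)/2"
  have tt: "t * ((w - s)/2) = 1" unfolding t_def using s2 by (simp add: field_simps power2_eq_square)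
  hence "t \<noteq> 0" by auto
  moreover have "1/t = (w-s)/2" using tt \<open>t\<noteq>0\<close> by (simp add: field_simps)
  moreover have "t + (w-s)/2 = w" unfolding t_def by (simp add: field_simps)
  ultimately show ?thesis by metis
qed

lemma kap_pair:
  assumes "kap a b x = 0" "\<alpha> \<noteq> 0" "a = \<alpha> + 1/\<alpha>"
  shows "\<exists>\<beta>. \<beta> \<noteq> 0 \<and> b = \<beta> + 1/\<beta> \<and> x = \<alpha>*\<beta> + 1/(\<alpha>*\<beta>)"
proof -
  obtain \<beta> where b: "\<beta> \<noteq> 0" "b = \<beta> + 1/\<beta>" using ex_inv by blast
  have "kap a b x = (x - (\<alpha>*\<beta> + 1/(\<alpha>*\<beta>))) * (x - (\<alpha>/\<beta> + \<beta>/\<alpha>))"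
    unfolding kap_def assms(3) b(2) using b(1) assms(2) by (simp add: field_simps) (algebra?)
  hence "x = \<alpha>*\<beta> + 1/(\<alpha>*\<beta>) \<or> x = \<alpha>/\<beta> + \<beta>/\<alpha>" using assms(1) by simp
  thus ?thesis
  proof
    assume "x = \<alpha>*\<beta> + 1/(\<alpha>*\<beta>)" thus ?thesis using b by blast
  next
    assume h: "x = \<alpha>/\<beta> + \<beta>/\<alpha>"
    show ?thesis
      by (rule exI[of _ "1/\<beta>"]) (use b h assms(2) in \<open>simp add: field_simps\<close>)
  qed
qed



definition "Red a b c d x y z \<longleftrightarrow> (\<exists>\<alpha> \<beta> \<gamma>::complex. \<alpha> \<noteq> 0 \<and> \<beta> \<noteq> 0 \<and> \<gamma> \<noteq> 0 \<and>
   a = \<alpha> + 1/\<alpha> \<and> b = \<beta> + 1/\<beta> \<and> c = \<gamma> + 1/\<gamma> \<and> d = \<alpha>*\<beta>*\<gamma> + 1/(\<alpha>*\<beta>*\<gamma>) \<and>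
   x = \<alpha>*\<beta> + 1/(\<alpha>*\<beta>) \<and> y = \<alpha>*\<gamma> + 1/(\<alpha>*\<gamma>) \<and> z = \<beta>*\<gamma> + 1/(\<beta>*\<gamma>))"
definition "L1 a b c d x y z \<longleftrightarrow> (\<exists>e::complex. (e = 1 \<or> e = -1) \<and> a = 2*e \<and> x = e*b \<and> y = e*c \<and> z = e*d)"
definition "L2 a b c d x y z \<longleftrightarrow> (\<exists>e::complex. (e = 1 \<or> e = -1) \<and> b = 2*e \<and> x = e*a \<and> z = e*c \<and> y = e*d)"
definition "L3 a b c d x y z \<longleftrightarrow> (\<exists>e::complex. (e = 1 \<or> e = -1) \<and> c = 2*e \<and> y = e*a \<and> z = e*b \<and> x = e*d)"
definition "L4 a b c d x y z \<longleftrightarrow> (\<exists>e::complex. (e = 1 \<or> e = -1) \<and> d = 2*e \<and> x = e*c \<and> y = e*b \<and> z = e*a)"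
definition "Good a b c d x y z \<longleftrightarrow> Red a b c d x y z \<or> L1 a b c d x y z \<or> L2 a b c d x y z \<or> L3 a b c d x y z \<or> L4 a b c d x y z"

lemma VC:
  assumes F: "Fp a b c d x y z = 0" "Fx a b c d x y z = 0" "Fy a b c d x y z = 0" "Fz a b c d x y z = 0"
    and x4: "x^2 \<noteq> 4" and k: "kap a b x = 0"
  shows "Red a b c d x y z \<or> L1 a b c d x y z \<or> L2 a b c d x y z"
proof -
  obtain \<alpha> where al: "\<alpha> \<noteq> 0" "a = \<alpha> + 1/\<alpha>" using ex_inv by blast
  obtain \<beta> where be: "\<beta> \<noteq> 0" "b = \<beta> + 1/\<beta>" "x = \<alpha>*\<beta> + 1/(\<alpha>*\<beta>)"
    using kap_pair[OF k al(1) al(2)] by blast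
  define P where "P = \<alpha>*\<beta> - 1/(\<alpha>*\<beta>)"
  define ua where "ua = \<alpha> - 1/\<alpha>"
  define ub where "ub = \<beta> - 1/\<beta>"
  have P2: "P^2 = x^2 - 4" unfolding P_def be(3) using al(1) be(1) by (simp add: field_simps power2_eq_square) (algebra?)
  have P0: "P \<noteq> 0" using P2 x4 by auto
  have hy: "(4 - x^2)*y = 2*(a*c+b*d) - x*(a*d+b*c)"
    using F(3,4) unfolding Fy_def Fz_def by algebra
  have hz: "(4 - x^2)*z = 2*(a*d+b*c) - x*(a*c+b*d)"
    using F(3,4) unfolding Fy_def Fz_def by algebra
  have e1: "2*(a*c+b*d) - x*(a*d+b*c) = -P*(c*ub + d*ua)"
    unfolding P_def ua_def ub_def al(2) be(2) be(3) using al(1) be(1) by (simp add: field_simps) (algebra?)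
  have e2: "2*(a*d+b*c) - x*(a*c+b*d) = -P*(c*ua + d*ub)"
    unfolding P_def ua_def ub_def al(2) be(2) be(3) using al(1) be(1) by (simp add: field_simps) (algebra?)
  have Py: "P*y = c*ub + d*ua"
  proof -
    have "P*(P*y) = P*(c*ub + d*ua)" using hy e1 P2 by (simp add: algebra_simps power2_eq_square) (algebra?)
    thus ?thesis using P0 by simp
  qed
  have Pz: "P*z = c*ua + d*ub"
  proof -
    have "P*(P*z) = P*(c*ua + d*ub)" using hz e2 P2 by (simp add: algebra_simps power2_eq_square) (algebra?)
    thus ?thesis using P0 by simp
  qed
  have e3: "2*x - a*b = ua*ub"
    unfolding ua_def ub_def al(2) be(2) be(3) using al(1) be(1) by (simp add: field_simps) (algebra?)
  have e4: "ua^2 + ub^2 - P^2 = - ua*ub*x"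
    unfolding P_def ua_def ub_def be(3) using al(1) be(1) by (simp add: field_simps) (algebra?)
  have "P^2 * Fx a b c d x y z = ua*ub*kap c d x"
  proof -
    have "P^2 * Fx a b c d x y z = P^2*(2*x - a*b) - P^2*c*d + (P*y)*(P*z)"
      unfolding Fx_def by (simp add: algebra_simps power2_eq_square)
    also have "\<dots> = ua*ub*kap c d x"
      unfolding Py Pz e3 kap_def using e4 P2 by (simp add: algebra_simps power2_eq_square) (algebra?)
    finally show ?thesis .
  qed
  hence "ua = 0 \<or> ub = 0 \<or> kap c d x = 0" using F(2) by simp
  moreover
  { assume "ua = 0"
    hence "\<alpha>^2 = 1" unfolding ua_def using al(1) by (simp add: field_simps power2_eq_square)
    hence e: "\<alpha> = 1 \<or> \<alpha> = -1" by (simp add: power2_eq_1_iff)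
    have ia: "1/\<alpha> = \<alpha>" using e by auto
    have aa: "\<alpha>*\<alpha> = 1" using e by auto
    have Pe: "P = \<alpha>*ub" unfolding P_def ub_def using ia al(1) be(1) by (simp add: field_simps)
    have ub0: "ub \<noteq> 0" using P0 Pe by auto
    have "\<alpha>*y = c" using Py \<open>ua = 0\<close> Pe ub0 by (simp add: algebra_simps)
    hence y: "y = \<alpha>*c" using aa by (metis mult.assoc mult_1)
    have "\<alpha>*z = d" using Pz \<open>ua = 0\<close> Pe ub0 by (simp add: algebra_simps)
    hence z: "z = \<alpha>*d" using aa by (metis mult.assoc mult_1)
    have "a = 2*\<alpha>" using al(2) ia by simp
    moreover have "x = \<alpha>*b" using be(2,3) ia aa al(1) be(1) by (simp add: field_simps) (algebra?)
    ultimately have "L1 a b c d x y z" unfolding L1_def using e y z by blast }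
  moreover
  { assume "ub = 0"
    hence "\<beta>^2 = 1" unfolding ub_def using be(1) by (simp add: field_simps power2_eq_square)
    hence e: "\<beta> = 1 \<or> \<beta> = -1" by (simp add: power2_eq_1_iff)
    have ib: "1/\<beta> = \<beta>" using e by auto
    have bb: "\<beta>*\<beta> = 1" using e by auto
    have Pe: "P = \<beta>*ua" unfolding P_def ua_def using ib al(1) be(1) by (simp add: field_simps)
    have ua0: "ua \<noteq> 0" using P0 Pe by auto
    have "\<beta>*y = d" using Py \<open>ub = 0\<close> Pe ua0 by (simp add: algebra_simps)
    hence y: "y = \<beta>*d" using bb by (metis mult.assoc mult_1)
    have "\<beta>*z = c" using Pz \<open>ub = 0\<close> Pe ua0 by (simp add: algebra_simps)
    hence z: "z = \<beta>*c" using bb by (metis mult.assoc mult_1)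
    have "b = 2*\<beta>" using be(2) ib by simp
    moreover have "x = \<beta>*a" using al(2) be(3) ib bb al(1) be(1) by (simp add: field_simps) (algebra?)
    ultimately have "L2 a b c d x y z" unfolding L2_def using e y z by blast }
  moreover
  { assume kc: "kap c d x = 0"
    have k2: "kap x c d = 0" using kc unfolding kap_def by (simp add: algebra_simps)
    have xi0: "\<alpha>*\<beta> \<noteq> 0" using al(1) be(1) by simp
    obtain \<gamma> where ga: "\<gamma> \<noteq> 0" "c = \<gamma> + 1/\<gamma>" "d = (\<alpha>*\<beta>)*\<gamma> + 1/((\<alpha>*\<beta>)*\<gamma>)"
      using kap_pair[OF k2 xi0 be(3)] by blast
    have "P*(\<alpha>*\<gamma> + 1/(\<alpha>*\<gamma>)) = c*ub + d*ua"
      unfolding P_def ua_def ub_def ga(2,3) using al(1) be(1) ga(1) by (simp add: field_simps) (algebra?)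
    hence y: "y = \<alpha>*\<gamma> + 1/(\<alpha>*\<gamma>)" using Py P0 by (metis mult_left_cancel)
    have "P*(\<beta>*\<gamma> + 1/(\<beta>*\<gamma>)) = c*ua + d*ub"
      unfolding P_def ua_def ub_def ga(2,3) using al(1) be(1) ga(1) by (simp add: field_simps) (algebra?)
    hence z: "z = \<beta>*\<gamma> + 1/(\<beta>*\<gamma>)" using Pz P0 by (metis mult_left_cancel)
    have "Red a b c d x y z" unfolding Red_def
      by (rule exI[of _ \<alpha>], rule exI[of _ \<beta>], rule exI[of _ \<gamma>]) (use al be ga y z in auto)
  }
  ultimately show ?thesis by blast
qed



lemma Fsym_P1: "Fp c d a b x y z = Fp a b c d x y z" "Fx c d a b x y z = Fx a b c d x y z"
  "Fy c d a b x y z = Fy a b c d x y z" "Fz c d a b x y z = Fz a b c d x y z"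
  unfolding Fp_def Fx_def Fy_def Fz_def by (simp_all add: algebra_simps)
lemma Fsym_P2: "Fp a c b d y x z = Fp a b c d x y z" "Fx a c b d y x z = Fy a b c d x y z"
  "Fy a c b d y x z = Fx a b c d x y z" "Fz a c b d y x z = Fz a b c d x y z"
  unfolding Fp_def Fx_def Fy_def Fz_def by (simp_all add: algebra_simps)
lemma Fsym_P3: "Fp a d c b z y x = Fp a b c d x y z" "Fx a d c b z y x = Fz a b c d x y z"
  "Fy a d c b z y x = Fy a b c d x y z" "Fz a d c b z y x = Fx a b c d x y z"
  unfolding Fp_def Fx_def Fy_def Fz_def by (simp_all add: algebra_simps)
lemma Fsym_P4: "Fp b a d c x y z = Fp a b c d x y z" "Fx b a d c x y z = Fx a b c d x y z"
  "Fy b a d c x y z = Fy a b c d x y z" "Fz b a d c x y z = Fz a b c d x y z"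
  unfolding Fp_def Fx_def Fy_def Fz_def by (simp_all add: algebra_simps)

lemma Red_P1: assumes "Red c d a b x y z" shows "Red a b c d x y z"
proof -
  obtain \<alpha> \<beta> \<gamma> where h: "\<alpha> \<noteq> 0" "\<beta> \<noteq> 0" "\<gamma> \<noteq> 0"
   "c = \<alpha> + 1/\<alpha>" "d = \<beta> + 1/\<beta>" "a = \<gamma> + 1/\<gamma>" "b = \<alpha>*\<beta>*\<gamma> + 1/(\<alpha>*\<beta>*\<gamma>)"
   "x = \<alpha>*\<beta> + 1/(\<alpha>*\<beta>)" "y = \<alpha>*\<gamma> + 1/(\<alpha>*\<gamma>)" "z = \<beta>*\<gamma> + 1/(\<beta>*\<gamma>)"
    using assms unfolding Red_def by blast
  show ?thesis unfolding Red_def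
    by (rule exI[of _ \<gamma>], rule exI[of _ "1/(\<alpha>*\<beta>*\<gamma>)"], rule exI[of _ \<alpha>]) (use h in \<open>simp add: field_simps\<close>)
qed
lemma Red_P2: assumes "Red a c b d y x z" shows "Red a b c d x y z"
proof -
  obtain \<alpha> \<beta> \<gamma> where h: "\<alpha> \<noteq> 0" "\<beta> \<noteq> 0" "\<gamma> \<noteq> 0"
   "a = \<alpha> + 1/\<alpha>" "c = \<beta> + 1/\<beta>" "b = \<gamma> + 1/\<gamma>" "d = \<alpha>*\<beta>*\<gamma> + 1/(\<alpha>*\<beta>*\<gamma>)"
   "y = \<alpha>*\<beta> + 1/(\<alpha>*\<beta>)" "x = \<alpha>*\<gamma> + 1/(\<alpha>*\<gamma>)" "z = \<beta>*\<gamma> + 1/(\<beta>*\<gamma>)"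
    using assms unfolding Red_def by blast
  show ?thesis unfolding Red_def
    by (rule exI[of _ \<alpha>], rule exI[of _ \<gamma>], rule exI[of _ \<beta>]) (use h in \<open>simp add: field_simps\<close>)
qed
lemma Red_P3: assumes "Red a d c b z y x" shows "Red a b c d x y z"
proof -
  obtain \<alpha> \<beta> \<gamma> where h: "\<alpha> \<noteq> 0" "\<beta> \<noteq> 0" "\<gamma> \<noteq> 0"
   "a = \<alpha> + 1/\<alpha>" "d = \<beta> + 1/\<beta>" "c = \<gamma> + 1/\<gamma>" "b = \<alpha>*\<beta>*\<gamma> + 1/(\<alpha>*\<beta>*\<gamma>)"
   "z = \<alpha>*\<beta> + 1/(\<alpha>*\<beta>)" "y = \<alpha>*\<gamma> + 1/(\<alpha>*\<gamma>)" "x = \<beta>*\<gamma> + 1/(\<beta>*\<gamma>)"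
    using assms unfolding Red_def by blast
  show ?thesis unfolding Red_def
    by (rule exI[of _ \<alpha>], rule exI[of _ "1/(\<alpha>*\<beta>*\<gamma>)"], rule exI[of _ \<gamma>]) (use h in \<open>simp add: field_simps\<close>)
qed
lemma Red_P4: assumes "Red b a d c x y z" shows "Red a b c d x y z"
proof -
  obtain \<alpha> \<beta> \<gamma> where h: "\<alpha> \<noteq> 0" "\<beta> \<noteq> 0" "\<gamma> \<noteq> 0"
   "b = \<alpha> + 1/\<alpha>" "a = \<beta> + 1/\<beta>" "d = \<gamma> + 1/\<gamma>" "c = \<alpha>*\<beta>*\<gamma> + 1/(\<alpha>*\<beta>*\<gamma>)"
   "x = \<alpha>*\<beta> + 1/(\<alpha>*\<beta>)" "y = \<alpha>*\<gamma> + 1/(\<alpha>*\<gamma>)" "z = \<beta>*\<gamma> + 1/(\<beta>*\<gamma>)"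
    using assms unfolding Red_def by blast
  show ?thesis unfolding Red_def
    by (rule exI[of _ \<beta>], rule exI[of _ \<alpha>], rule exI[of _ "1/(\<alpha>*\<beta>*\<gamma>)"]) (use h in \<open>simp add: field_simps\<close>)
qed

lemma L1_P1: "L1 c d a b x y z \<Longrightarrow> L3 a b c d x y z"
  unfolding L1_def L2_def L3_def L4_def by auto
lemma L2_P1: "L2 c d a b x y z \<Longrightarrow> L4 a b c d x y z"
  unfolding L1_def L2_def L3_def L4_def by auto
lemma L3_P1: "L3 c d a b x y z \<Longrightarrow> L1 a b c d x y z"
  unfolding L1_def L2_def L3_def L4_def by auto
lemma L4_P1: "L4 c d a b x y z \<Longrightarrow> L2 a b c d x y z"
  unfolding L1_def L2_def L3_def L4_def by auto
lemma Good_P1: "Good c d a b x y z \<Longrightarrow> Good a b c d x y z"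
  unfolding Good_def using Red_P1[of c d a b x y z] L1_P1[of c d a b x y z] L2_P1[of c d a b x y z] L3_P1[of c d a b x y z] L4_P1[of c d a b x y z] by blast

lemma L1_P2: "L1 a c b d y x z \<Longrightarrow> L1 a b c d x y z"
  unfolding L1_def L2_def L3_def L4_def by auto
lemma L2_P2: "L2 a c b d y x z \<Longrightarrow> L3 a b c d x y z"
  unfolding L1_def L2_def L3_def L4_def by auto
lemma L3_P2: "L3 a c b d y x z \<Longrightarrow> L2 a b c d x y z"
  unfolding L1_def L2_def L3_def L4_def by auto
lemma L4_P2: "L4 a c b d y x z \<Longrightarrow> L4 a b c d x y z"
  unfolding L1_def L2_def L3_def L4_def by auto
lemma Good_P2: "Good a c b d y x z \<Longrightarrow> Good a b c d x y z"
  unfolding Good_def using Red_P2[of a c b d y x z] L1_P2[of a c b d y x z] L2_P2[of a c b d y x z] L3_P2[of a c b d y x z] L4_P2[of a c b d y x z] by blast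

lemma L1_P3: "L1 a d c b z y x \<Longrightarrow> L1 a b c d x y z"
  unfolding L1_def L2_def L3_def L4_def by auto
lemma L2_P3: "L2 a d c b z y x \<Longrightarrow> L4 a b c d x y z"
  unfolding L1_def L2_def L3_def L4_def by auto
lemma L3_P3: "L3 a d c b z y x \<Longrightarrow> L3 a b c d x y z"
  unfolding L1_def L2_def L3_def L4_def by auto
lemma L4_P3: "L4 a d c b z y x \<Longrightarrow> L2 a b c d x y z"
  unfolding L1_def L2_def L3_def L4_def by auto
lemma Good_P3: "Good a d c b z y x \<Longrightarrow> Good a b c d x y z"
  unfolding Good_def using Red_P3[of a d c b z y x] L1_P3[of a d c b z y x] L2_P3[of a d c b z y x] L3_P3[of a d c b z y x] L4_P3[of a d c b z y x] by blast

lemma L1_P4: "L1 b a d c x y z \<Longrightarrow> L2 a b c d x y z"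
  unfolding L1_def L2_def L3_def L4_def by auto
lemma L2_P4: "L2 b a d c x y z \<Longrightarrow> L1 a b c d x y z"
  unfolding L1_def L2_def L3_def L4_def by auto
lemma L3_P4: "L3 b a d c x y z \<Longrightarrow> L4 a b c d x y z"
  unfolding L1_def L2_def L3_def L4_def by auto
lemma L4_P4: "L4 b a d c x y z \<Longrightarrow> L3 a b c d x y z"
  unfolding L1_def L2_def L3_def L4_def by auto
lemma Good_P4: "Good b a d c x y z \<Longrightarrow> Good a b c d x y z"
  unfolding Good_def using Red_P4[of b a d c x y z] L1_P4[of b a d c x y z] L2_P4[of b a d c x y z] L3_P4[of b a d c x y z] L4_P4[of b a d c x y z] by blast



lemma kk0: assumes "Fp a b c d x y z = 0" "Fy a b c d x y z = 0" "Fz a b c d x y z = 0"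
  shows "kap a b x * kap c d x = 0"
  using idK[of x a b c d y z] assms by simp

lemma GX: assumes F: "Fp a b c d x y z = 0" "Fx a b c d x y z = 0" "Fy a b c d x y z = 0" "Fz a b c d x y z = 0"
    and x4: "x^2 \<noteq> 4"
  shows "Good a b c d x y z"
proof -
  have "kap a b x = 0 \<or> kap c d x = 0" using kk0[OF F(1,3,4)] by simp
  thus ?thesis
  proof
    assume "kap a b x = 0"
    thus ?thesis using VC[OF F x4] unfolding Good_def by blast
  next
    assume "kap c d x = 0"
    hence "Red c d a b x y z \<or> L1 c d a b x y z \<or> L2 c d a b x y z"
      using VC[of c d a b x y z] F x4 Fsym_P1[of a b c d x y z] by simp
    hence "Good c d a b x y z" unfolding Good_def by blast
    thus ?thesis by (rule Good_P1)
  qed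
qed

lemma GY: assumes F: "Fp a b c d x y z = 0" "Fx a b c d x y z = 0" "Fy a b c d x y z = 0" "Fz a b c d x y z = 0"
    and "y^2 \<noteq> 4"
  shows "Good a b c d x y z"
proof -
  have "Good a c b d y x z" by (rule GX) (use assms Fsym_P2[of a b c d x y z] in simp_all)
  thus ?thesis by (rule Good_P2)
qed

lemma GZ: assumes F: "Fp a b c d x y z = 0" "Fx a b c d x y z = 0" "Fy a b c d x y z = 0" "Fz a b c d x y z = 0"
    and "z^2 \<noteq> 4"
  shows "Good a b c d x y z"
proof -
  have "Good a d c b z y x" by (rule GX) (use assms Fsym_P3[of a b c d x y z] in simp_all)
  thus ?thesis by (rule Good_P3)
qed

lemma Red_zero:
  assumes e: "e1 = 1 \<or> e1 = -1" "e2 = 1 \<or> e2 = -1" and e3: "e3 = - e1*e2"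
  shows "Red 0 0 0 0 (2*e1) (2*e2) (2*e3)"
  unfolding Red_def
  by (rule exI[of _ \<i>], rule exI[of _ "-e1*\<i>"], rule exI[of _ "-e2*\<i>"]) (use e e3 in auto)

lemma sq4: "(a::complex)^2 = 4 \<Longrightarrow> a = 2 \<or> a = -2"
proof -
  assume "a^2 = 4"
  hence "(a-2)*(a+2) = 0" by (simp add: algebra_simps power2_eq_square)
  hence "a - 2 = 0 \<or> a + 2 = 0" by simp
  thus ?thesis by (metis add.commute add_diff_cancel_left' diff_0 eq_iff_diff_eq_0)
qed

lemma core:
  assumes F: "Fp a b c d x y z = 0" "Fx a b c d x y z = 0" "Fy a b c d x y z = 0" "Fz a b c d x y z = 0"
    and e: "e1 = 1 \<or> e1 = -1" "e2 = 1 \<or> e2 = -1" "e3 = 1 \<or> e3 = -1"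
    and xyz: "x = 2*e1" "y = 2*e2" "z = 2*e3"
    and h1: "a = e1*b" and h2: "a = e2*c" and h3: "a = e3*d \<or> b = e3*c"
  shows "Good a b c d x y z"
proof -
  have b: "b = e1*a" and c: "c = e2*a" using h1 h2 e by auto
  have L: "L1 a b c d x y z" if "a^2 = 4" and d: "d = e3*a"
  proof -
    have h: "a = 2 \<or> a = -2" using sq4 that(1) by blast
    define \<epsilon> where "\<epsilon> = a/2"
    have ep: "\<epsilon> = 1 \<or> \<epsilon> = -1" "a = 2*\<epsilon>" using h unfolding \<epsilon>_def by auto
    have eps: "\<epsilon>*\<epsilon> = 1" using ep(1) by auto
    have ee: "e1*e1 = 1" "e2*e2 = 1" "e3*e3 = 1" using e by auto
    have "x = \<epsilon>*b" using xyz(1) b ep(2) eps ee by algebra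
    moreover have "y = \<epsilon>*c" using xyz(2) c ep(2) eps ee by algebra
    moreover have "z = \<epsilon>*d" using xyz(3) d ep(2) eps ee by algebra
    ultimately show ?thesis unfolding L1_def using ep by blast
  qed
  have ee: "e1*e1 = 1" "e2*e2 = 1" "e3*e3 = 1" using e by auto
  from h3 show ?thesis
  proof
    assume "a = e3*d"
    hence d: "d = e3*a" using e by auto
    have P: "a^2 * (a^2 - 4)^2 = 0"
      using F(1) ee unfolding Fp_def xyz b c d by algebra
    hence "a = 0 \<or> a^2 = 4" by auto
    thus ?thesis
    proof
      assume a0: "a = 0"
      have "8 + 8*(e1*e2*e3) = 0" using F(1) ee a0 unfolding Fp_def xyz b c d by algebra
      hence "e3 = -e1*e2" using ee by algebra
      thus ?thesis using Red_zero[OF e(1,2)] a0 b c d xyz unfolding Good_def by simp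
    qed (use L d in \<open>auto simp: Good_def\<close>)
  next
    assume "b = e3*c"
    hence "a*(e1 - e2*e3) = 0" using b c by (simp add: algebra_simps)
    hence "a = 0 \<or> e1 = e2*e3" by auto
    thus ?thesis
    proof
      assume a0: "a = 0"
      have "4*e1 + 4*e2*e3 = 0" using F(2) a0 unfolding Fx_def xyz b c by algebra
      hence e3: "e3 = -e1*e2" using ee by algebra
      have "d^2 = 0" using F(1) ee e3 a0 unfolding Fp_def xyz b c by algebra
      hence "d = 0" by simp
      thus ?thesis using Red_zero[OF e(1,2) e3] a0 b c xyz unfolding Good_def by simp
    next
      assume e1: "e1 = e2*e3"
      show ?thesis
      proof (cases "a = 0")
        case True
        have "4*e1 + 4*e2*e3 = 0" using F(2) True unfolding Fx_def xyz b c by algebra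
        hence False using e1 ee by algebra
        thus ?thesis ..
      next
        case False
        have ad: "a*d = e3*(8 - a^2)" using F(4) ee e1 unfolding Fz_def xyz b c by algebra
        have "a^2 * Fp a b c d x y z = - ((a^2-4)^3)" using ad ee e1 unfolding Fp_def xyz b c by algebra
        hence a4: "a^2 = 4" using F(1) by simp
        hence "a*d = a*(e3*a)" using ad by (simp add: algebra_simps power2_eq_square)
        hence "d = e3*a" using False by simp
        thus ?thesis using L a4 unfolding Good_def by blast
      qed
    qed
  qed
qed



definition "Fb a b c d x y z = 2*b - a*x - d*y - c*z + a*c*(d::complex)"
definition "Fc a b c d x y z = 2*c - d*x - a*y - b*z + a*b*(d::complex)"
definition "Fd a b c d x y z = 2*d - c*x - b*y - a*z + a*b*(c::complex)"

lemma kap2: "e*e = 1 \<Longrightarrow> kap u v (2*e) = (u - e * v)^2"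
  unfolding kap_def by algebra

lemma kap2z: "e*e = 1 \<Longrightarrow> kap u v (2*e) = 0 \<Longrightarrow> u = e * v"
  using kap2[of e u v] by simp

lemma pm: "(t::complex)^2 = 4 \<Longrightarrow> \<exists>e. (e = 1 \<or> e = -1) \<and> t = 2*e \<and> e*e = 1"
  using sq4[of t] by (metis mult.right_neutral mult_minus_right mult_minus_left minus_minus mult_1)

lemma All2:
  assumes F: "Fp a b c d x y z = 0" "Fx a b c d x y z = 0" "Fy a b c d x y z = 0" "Fz a b c d x y z = 0"
    and x4: "x^2 = 4" and y4: "y^2 = 4" and z4: "z^2 = 4"
  shows "Good a b c d x y z"
proof -
  obtain e1 where e1: "e1 = 1 \<or> e1 = -1" "x = 2*e1" "e1*e1 = 1" using pm[OF x4] by blast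
  obtain e2 where e2: "e2 = 1 \<or> e2 = -1" "y = 2*e2" "e2*e2 = 1" using pm[OF y4] by blast
  obtain e3 where e3: "e3 = 1 \<or> e3 = -1" "z = 2*e3" "e3*e3 = 1" using pm[OF z4] by blast
  have "kap a b x * kap c d x = 0" using kk0[OF F(1,3,4)] .
  hence D1: "a = e1*b \<or> c = e1*d" using kap2z[OF e1(3)] e1(2) by auto
  have "kap a c y * kap b d y = 0" using kk0[of a c b d y x z] F Fsym_P2[of a b c d x y z] by simp
  hence D2: "a = e2*c \<or> b = e2*d" using kap2z[OF e2(3)] e2(2) by auto
  have "kap a d z * kap c b z = 0" using kk0[of a d c b z y x] F Fsym_P3[of a b c d x y z] by simp
  hence D3: "a = e3*d \<or> c = e3*b" using kap2z[OF e3(3)] e3(2) by auto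
  have sw: "c = e3*b \<longleftrightarrow> b = e3*c" using e3(3) by (metis mult.assoc mult_1)
  have sw2: "a = e3*d \<longleftrightarrow> d = e3*a" using e3(3) by (metis mult.assoc mult_1)
  have sw1: "a = e1*b \<longleftrightarrow> b = e1*a" using e1(3) by (metis mult.assoc mult_1)
  have sw1': "c = e1*d \<longleftrightarrow> d = e1*c" using e1(3) by (metis mult.assoc mult_1)
  have swa: "a = e2*c \<longleftrightarrow> c = e2*a" using e2(3) by (metis mult.assoc mult_1)
  have swb: "b = e2*d \<longleftrightarrow> d = e2*b" using e2(3) by (metis mult.assoc mult_1)
  from D1 show ?thesis
  proof
    assume h1: "a = e1*b"
    from D2 show ?thesis
    proof
      assume h2: "a = e2*c"
      show ?thesis using core[OF F e1(1) e2(1) e3(1) e1(2) e2(2) e3(2) h1 h2] D3 sw by blast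
    next
      assume h2: "b = e2*d"
      have FF: "Fp b a d c x y z = 0" "Fx b a d c x y z = 0" "Fy b a d c x y z = 0" "Fz b a d c x y z = 0"
        using F Fsym_P4[of a b c d x y z] by simp_all
      have "b = e1*a" using h1 sw1 by blast
      moreover have "b = e3*c \<or> a = e3*d" using D3 sw by blast
      ultimately have "Good b a d c x y z"
        using core[OF FF e1(1) e2(1) e3(1) e1(2) e2(2) e3(2)] h2 by blast
      thus ?thesis by (rule Good_P4)
    qed
  next
    assume h1: "c = e1*d"
    from D2 show ?thesis
    proof
      assume h2: "a = e2*c"
      have FF: "Fp c d a b x y z = 0" "Fx c d a b x y z = 0" "Fy c d a b x y z = 0" "Fz c d a b x y z = 0"
        using F Fsym_P1[of a b c d x y z] by simp_all
      have "c = e2*a" using h2 swa by blast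
      moreover have "c = e3*b \<or> d = e3*a" using D3 sw2 by blast
      ultimately have "Good c d a b x y z"
        using core[OF FF e1(1) e2(1) e3(1) e1(2) e2(2) e3(2)] h1 by blast
      thus ?thesis by (rule Good_P1)
    next
      assume h2: "b = e2*d"
      have FF: "Fp d c b a x y z = 0" "Fx d c b a x y z = 0" "Fy d c b a x y z = 0" "Fz d c b a x y z = 0"
        using F Fsym_P1[of b a d c x y z] Fsym_P4[of a b c d x y z] by simp_all
      have "d = e1*c" using h1 sw1' by blast
      moreover have "d = e2*b" using h2 swb by blast
      moreover have "d = e3*a \<or> c = e3*b" using D3 sw2 by blast
      ultimately have "Good d c b a x y z"
        using core[OF FF e1(1) e2(1) e3(1) e1(2) e2(2) e3(2)] by blast
      hence "Good b a d c x y z" by (rule Good_P1)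
      thus ?thesis by (rule Good_P4)
    qed
  qed
qed

lemma GoodAll:
  assumes F: "Fp a b c d x y z = 0" "Fx a b c d x y z = 0" "Fy a b c d x y z = 0" "Fz a b c d x y z = 0"
  shows "Good a b c d x y z"
  using GX[OF F] GY[OF F] GZ[OF F] All2[OF F] by blast



lemma LRed1: assumes "L1 a b c d x y z" "Fa a b c d x y z = 0" shows "Red a b c d x y z"
proof -
  obtain e where e: "e = 1 \<or> e = -1" "a = 2*e" "x = e*b" "y = e*c" "z = e*d"
    using assms(1) unfolding L1_def by blast
  have ee: "e*e = 1" "1/e = e" "e \<noteq> 0" using e(1) by auto
  have "kap b c (e*d) = 0" using assms(2) e ee(1) unfolding Fa_def kap_def by algebra
  moreover obtain \<beta> where be: "\<beta> \<noteq> 0" "b = \<beta> + 1/\<beta>" using ex_inv by blast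
  ultimately obtain \<gamma> where ga: "\<gamma> \<noteq> 0" "c = \<gamma> + 1/\<gamma>" "e*d = \<beta>*\<gamma> + 1/(\<beta>*\<gamma>)"
    using kap_pair by blast
  have d: "d = e*(\<beta>*\<gamma> + 1/(\<beta>*\<gamma>))" using ga(3) ee(1) by (metis mult.assoc mult_1)
  have i1: "1/(e*t) = e*(1/t)" for t
  proof -
    have "1/(e*t) = (1/e)*(1/t)" by simp
    thus ?thesis using ee(2) by simp
  qed
  have "a = e + 1/e" using e(2) ee(2) by simp
  moreover have "d = e*\<beta>*\<gamma> + 1/(e*\<beta>*\<gamma>)" using d i1[of "\<beta>*\<gamma>"] by (simp add: algebra_simps)
  moreover have "x = e*\<beta> + 1/(e*\<beta>)" using e(3) be(2) i1[of \<beta>] by (simp add: algebra_simps)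
  moreover have "y = e*\<gamma> + 1/(e*\<gamma>)" using e(4) ga(2) i1[of \<gamma>] by (simp add: algebra_simps)
  moreover have "z = \<beta>*\<gamma> + 1/(\<beta>*\<gamma>)" using e(5) ga(3) ee(1) by (metis mult.assoc mult_1)
  ultimately show ?thesis unfolding Red_def using ee(3) be ga(1,2) by blast
qed

lemma LRed2: assumes "L2 a b c d x y z" "Fb a b c d x y z = 0" shows "Red a b c d x y z"
proof -
  have "L1 b a d c x y z" using assms(1) unfolding L1_def L2_def by auto
  moreover have "Fa b a d c x y z = 0" using assms(2) unfolding Fa_def Fb_def by (simp add: algebra_simps)
  ultimately show ?thesis using LRed1 Red_P4 by blast
qed

lemma LRed3: assumes "L3 a b c d x y z" "Fc a b c d x y z = 0" shows "Red a b c d x y z"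
proof -
  have "L1 c d a b x y z" using assms(1) unfolding L1_def L3_def by auto
  moreover have "Fa c d a b x y z = 0" using assms(2) unfolding Fa_def Fc_def by (simp add: algebra_simps)
  ultimately show ?thesis using LRed1 Red_P1 by blast
qed

lemma LRed4: assumes "L4 a b c d x y z" "Fd a b c d x y z = 0" shows "Red a b c d x y z"
proof -
  have "L1 d c b a x y z" using assms(1) unfolding L1_def L4_def by auto
  moreover have "Fa d c b a x y z = 0" using assms(2) unfolding Fa_def Fd_def by (simp add: algebra_simps)
  ultimately have "Red d c b a x y z" using LRed1 by blast
  hence "Red b a d c x y z" by (rule Red_P1)
  thus ?thesis by (rule Red_P4)
qed

lemma RedZ: assumes "Red a b c d x y z"
  shows "Fp a b c d x y z = 0 \<and> Fx a b c d x y z = 0 \<and> Fy a b c d x y z = 0 \<and> Fz a b c d x y z = 0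
    \<and> Fa a b c d x y z = 0 \<and> Fb a b c d x y z = 0 \<and> Fc a b c d x y z = 0 \<and> Fd a b c d x y z = 0"
proof -
  obtain \<alpha> \<beta> \<gamma> where h: "\<alpha> \<noteq> 0" "\<beta> \<noteq> 0" "\<gamma> \<noteq> 0"
   "a = \<alpha> + 1/\<alpha>" "b = \<beta> + 1/\<beta>" "c = \<gamma> + 1/\<gamma>" "d = \<alpha>*\<beta>*\<gamma> + 1/(\<alpha>*\<beta>*\<gamma>)"
   "x = \<alpha>*\<beta> + 1/(\<alpha>*\<beta>)" "y = \<alpha>*\<gamma> + 1/(\<alpha>*\<gamma>)" "z = \<beta>*\<gamma> + 1/(\<beta>*\<gamma>)"
    using assms unfolding Red_def by blast
  define p where "p = 1/\<alpha>" define q where "q = 1/\<beta>" define r where "r = 1/\<gamma>"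
  have pq: "\<alpha>*p = 1" "\<beta>*q = 1" "\<gamma>*r = 1" using h(1-3) unfolding p_def q_def r_def by auto
  have hh: "a = \<alpha> + p" "b = \<beta> + q" "c = \<gamma> + r" "d = \<alpha>*\<beta>*\<gamma> + p*q*r"
   "x = \<alpha>*\<beta> + p*q" "y = \<alpha>*\<gamma> + p*r" "z = \<beta>*\<gamma> + q*r"
    using h(4-10) unfolding p_def q_def r_def by auto
  have "Fp a b c d x y z = 0" unfolding Fp_def hh using pq by algebra
  moreover have "Fx a b c d x y z = 0" unfolding Fx_def hh using pq by algebra
  moreover have "Fy a b c d x y z = 0" unfolding Fy_def hh using pq by algebra
  moreover have "Fz a b c d x y z = 0" unfolding Fz_def hh using pq by algebra
  moreover have "Fa a b c d x y z = 0" unfolding Fa_def hh using pq by algebra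
  moreover have "Fb a b c d x y z = 0" unfolding Fb_def hh using pq by algebra
  moreover have "Fc a b c d x y z = 0" unfolding Fc_def hh using pq by algebra
  moreover have "Fd a b c d x y z = 0" unfolding Fd_def hh by (simp add: algebra_simps)
  ultimately show ?thesis by blast
qed

lemma L1Z: "L1 a b c d x y z \<Longrightarrow> Fx a b c d x y z = 0 \<and> Fy a b c d x y z = 0 \<and> Fz a b c d x y z = 0
    \<and> Fb a b c d x y z = 0 \<and> Fc a b c d x y z = 0 \<and> Fd a b c d x y z = 0"
  unfolding L1_def Fx_def Fy_def Fz_def Fb_def Fc_def Fd_def by (elim exE conjE disjE) (simp_all add: algebra_simps)
lemma L2Z: "L2 a b c d x y z \<Longrightarrow> Fx a b c d x y z = 0 \<and> Fy a b c d x y z = 0 \<and> Fz a b c d x y z = 0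
    \<and> Fa a b c d x y z = 0 \<and> Fc a b c d x y z = 0 \<and> Fd a b c d x y z = 0"
  unfolding L2_def Fx_def Fy_def Fz_def Fa_def Fc_def Fd_def by (elim exE conjE disjE) (simp_all add: algebra_simps)
lemma L3Z: "L3 a b c d x y z \<Longrightarrow> Fx a b c d x y z = 0 \<and> Fy a b c d x y z = 0 \<and> Fz a b c d x y z = 0
    \<and> Fa a b c d x y z = 0 \<and> Fb a b c d x y z = 0 \<and> Fd a b c d x y z = 0"
  unfolding L3_def Fx_def Fy_def Fz_def Fa_def Fb_def Fd_def by (elim exE conjE disjE) (simp_all add: algebra_simps)
lemma L4Z: "L4 a b c d x y z \<Longrightarrow> Fx a b c d x y z = 0 \<and> Fy a b c d x y z = 0 \<and> Fz a b c d x y z = 0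
    \<and> Fa a b c d x y z = 0 \<and> Fb a b c d x y z = 0 \<and> Fc a b c d x y z = 0"
  unfolding L4_def Fx_def Fy_def Fz_def Fa_def Fb_def Fc_def by (elim exE conjE disjE) (simp_all add: algebra_simps)



fun chebd :: "nat \<Rightarrow> complex \<Rightarrow> complex" where
  "chebd 0 x = 0"
| "chebd (Suc 0) x = 1"
| "chebd (Suc (Suc n)) x = cheb (Suc n) x + x * chebd (Suc n) x - chebd n x"

lemma cheb_deriv: "(cheb n has_field_derivative chebd n x) (at x)"
proof (induction n x rule: cheb.induct)
  case (1 y) show ?case by (simp add: DERIV_const)
next
  case (2 y) show ?case using DERIV_ident by simp
next
  case (3 n x)
  have e: "cheb (Suc (Suc n)) = (\<lambda>t. t * cheb (Suc n) t - cheb n t)" by (rule ext) simp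
  have "((\<lambda>t. t * cheb (Suc n) t - cheb n t) has_field_derivative
        (1 * cheb (Suc n) x + chebd (Suc n) x * x) - chebd n x) (at x)"
    by (intro DERIV_diff DERIV_mult DERIV_ident 3)
  thus ?case unfolding e by (simp add: mult.commute)
qed

lemma cheb_t0: "t \<noteq> 0 \<Longrightarrow> w = t + 1/t \<Longrightarrow> cheb n w = t^n + 1/t^n"
proof (induction n w rule: cheb.induct)
  case (3 n w)
  have "cheb (Suc (Suc n)) w = (t + 1/t) * (t^Suc n + 1/t^Suc n) - (t^n + 1/t^n)"
    using 3 by simp
  also have "\<dots> = t^Suc (Suc n) + 1/t^Suc(Suc n)" using 3(3) by (simp add: field_simps)
  finally show ?case .
qed auto

lemma cheb_t: "t \<noteq> 0 \<Longrightarrow> cheb n (t + 1/t) = t^n + 1/t^n" using cheb_t0 by blast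

lemma chebd_t0: "t \<noteq> 0 \<Longrightarrow> w = t + 1/t \<Longrightarrow> chebd n w * (t - 1/t) = of_nat n * (t^n - 1/t^n)"
proof (induction n w rule: cheb.induct)
  case (3 n w)
  have "chebd (Suc (Suc n)) w * (t - 1/t) =
     cheb (Suc n) w * (t - 1/t) + w * (chebd (Suc n) w * (t - 1/t))
       - chebd n w * (t - 1/t)"
    by (simp add: algebra_simps)
  also have "\<dots> = (t^Suc n + 1/t^Suc n) * (t - 1/t) + (t + 1/t) * (chebd (Suc n) w * (t - 1/t))
       - chebd n w * (t - 1/t)"
    using cheb_t[OF 3(3)] 3(4) by simp
  also have "\<dots> = (t^Suc n + 1/t^Suc n) * (t - 1/t) + (t + 1/t) * (of_nat (Suc n) * (t^Suc n - 1/t^Suc n))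
       - of_nat n * (t^n - 1/t^n)" using 3(1,2)[OF 3(3,4)] by (simp del: of_nat_Suc)
  also have "\<dots> = of_nat (Suc (Suc n)) * (t^Suc (Suc n) - 1/t^Suc (Suc n))"
    using 3(3) by (simp add: field_simps; simp add: algebra_simps)
  finally show ?case .
qed auto

lemma chebd_t: "t \<noteq> 0 \<Longrightarrow> chebd n (t + 1/t) * (t - 1/t) = of_nat n * (t^n - 1/t^n)"
  using chebd_t0 by blast

lemma cheb_2: "cheb n 2 = 2" using cheb_t[of 1 n] by simp
lemma cheb_m2: "cheb n (-2) = 2 * (-1)^n" using cheb_t[of "-1" n] by (cases "even n") simp_all

lemma chebd_20: "w = 2 \<Longrightarrow> chebd n w = of_nat (n^2)"
proof (induction n w rule: cheb.induct)
  case (3 n w) thus ?case by (simp add: cheb_2 power2_eq_square algebra_simps)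
qed auto

lemma chebd_m20: "w = -2 \<Longrightarrow> chebd n w = (-1)^(n+1) * of_nat (n^2)"
proof (induction n w rule: cheb.induct)
  case (3 n w) thus ?case by (simp add: cheb_m2 power2_eq_square algebra_simps)
qed auto

lemma chebd_2: "chebd n 2 = of_nat (n^2)" by (rule chebd_20) simp
lemma chebd_m2: "chebd n (-2) = (-1)^(n+1) * of_nat (n^2)" by (rule chebd_m20) simp

lemma pm1: "((u::complex)-1)*(u+1) = 0 \<Longrightarrow> u = 1 \<or> u = -1"
proof -
  assume "(u-1)*(u+1) = 0"
  hence "u - 1 = 0 \<or> u + 1 = 0" by simp
  thus ?thesis by (auto simp: eq_neg_iff_add_eq_0)
qed

lemma C1: assumes "N > 0" "chebd N w = 0"
  shows "w \<noteq> 2 \<and> w \<noteq> -2 \<and> (cheb N w = 2 \<or> cheb N w = -2)"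
proof -
  have "w \<noteq> 2" using assms chebd_2[of N] by auto
  moreover have "w \<noteq> -2" using assms chebd_m2[of N] by auto
  moreover
  obtain t where t: "t \<noteq> 0" "w = t + 1/t" using ex_inv by blast
  have "of_nat N * (t^N - 1/t^N) = 0" using chebd_t[OF t(1), of N] assms(2) t(2) by simp
  hence "t^N = 1/t^N" using assms(1) by simp
  hence "(t^N)*(t^N) = 1" using t(1) by (simp add: field_simps)
  hence "(t^N - 1)*(t^N + 1) = 0" by (simp add: algebra_simps)
  hence "t^N = 1 \<or> t^N = -1" by (rule pm1)
  hence "cheb N w = 2 \<or> cheb N w = -2" using cheb_t[OF t(1), of N] t(2) by auto
  ultimately show ?thesis by blast
qed

lemma C2: assumes "cheb N w = 2 \<or> cheb N w = -2" "w \<noteq> 2" "w \<noteq> -2"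
  shows "chebd N w = 0"
proof -
  obtain t where t: "t \<noteq> 0" "w = t + 1/t" using ex_inv by blast
  define u where "u = t^N"
  have u0: "u \<noteq> 0" using t(1) unfolding u_def by simp
  have "u + 1/u = 2 \<or> u + 1/u = -2" using assms(1) cheb_t[OF t(1), of N] t(2) unfolding u_def by simp
  hence "u = 1 \<or> u = -1"
  proof
    assume "u + 1/u = 2"
    hence "u*u + 1 = 2*u" using u0 by (simp add: field_simps)
    hence "(u-1)*(u-1) = 0" by algebra
    thus ?thesis by simp
  next
    assume "u + 1/u = -2"
    hence "u*u + 1 = -2*u" using u0 by (simp add: field_simps)
    hence "(u+1)*(u+1) = 0" by algebra
    thus ?thesis by (simp add: eq_neg_iff_add_eq_0)
  qed
  hence "u - 1/u = 0" by auto
  hence "chebd N w * (t - 1/t) = 0" using chebd_t[OF t(1), of N] t(2) unfolding u_def by simp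
  moreover have "t - 1/t \<noteq> 0"
  proof
    assume "t - 1/t = 0"
    hence "t*t = 1" using t(1) by (simp add: field_simps)
    hence "(t-1)*(t+1) = 0" by (simp add: algebra_simps)
    hence "t = 1 \<or> t = -1" by (rule pm1)
    thus False using assms(2,3) t(2) by auto
  qed
  ultimately show ?thesis by simp
qed



definition m2 :: "complex \<Rightarrow> complex \<Rightarrow> complex \<Rightarrow> complex \<Rightarrow> mat2" where
  "m2 p q r s = vector [vector [p, q], vector [r, s]]"

lemma m2_nth[simp]: "m2 p q r s $ 1 $ 1 = p" "m2 p q r s $ 1 $ 2 = q" "m2 p q r s $ 2 $ 1 = r" "m2 p q r s $ 2 $ 2 = s"
  unfolding m2_def by simp_all

lemma m2_eta: "M = m2 (M$1$1) (M$1$2) (M$2$1) (M$2$2)"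
  unfolding vec_eq_iff forall_2 by simp

lemma m2_ex: "\<exists>p q r s. M = m2 p q r s" using m2_eta by blast

lemma m2_eq: "m2 p q r s = m2 p' q' r' s' \<longleftrightarrow> p = p' \<and> q = q' \<and> r = r' \<and> s = s'"
  by (metis m2_nth)

lemma m2_mult: "m2 a b c d ** m2 e f g h = m2 (a*e+b*g) (a*f+b*h) (c*e+d*g) (c*f+d*h)"
  unfolding vec_eq_iff forall_2 matrix_matrix_mult_def by (simp add: sum_2)

lemma m2_det: "det (m2 p q r s) = p * s - q * r" by (simp add: det_2)
lemma m2_tr: "tr2 (m2 p q r s) = p + s" by (simp add: tr2_def)
lemma mat_m2: "mat e = m2 e 0 0 e" unfolding vec_eq_iff forall_2 by (simp add: mat_def)
lemma m2_mv: "(m2 p q r s *v v) $ 1 = p  * v$1 + q  * v$2" "(m2 p q r s *v v) $ 2 = r  * v$1 + s  * v$2"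
  by (simp_all add: matrix_vector_mult_def sum_2)

lemma neg_mat: "- mat 1 = (mat (-1) :: mat2)" unfolding vec_eq_iff forall_2 by (simp add: mat_def)

lemma trinv: fixes P Q :: mat2 assumes "det P = 1" "P ** Q = mat e" shows "tr2 Q = e * tr2 P"
proof -
  obtain p1 p2 p3 p4 where P: "P = m2 p1 p2 p3 p4" using m2_ex by blast
  obtain q1 q2 q3 q4 where Q: "Q = m2 q1 q2 q3 q4" using m2_ex by blast
  show ?thesis using assms unfolding P Q m2_mult mat_m2 m2_eq m2_det m2_tr by algebra
qed

lemma mat_comm: "mat e ** (X::mat2) = X ** (mat e :: mat2)"
proof -
  obtain p1 p2 p3 p4 where P: "X = m2 p1 p2 p3 p4" using m2_ex by blast
  show ?thesis unfolding P mat_m2 m2_mult m2_eq by (simp add: algebra_simps)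
qed

lemma mat_mat: "mat a ** mat b = (mat (a*b) :: mat2)"
  unfolding mat_m2 m2_mult m2_eq by simp

lemma mat_inv: assumes "mat e ** Y = mat 1" "e*e = 1" shows "Y = (mat e :: mat2)"
proof -
  have "mat e ** (mat e ** Y) = mat e ** mat 1" using assms(1) by simp
  hence "mat (e*e) ** Y = mat e" by (simp add: matrix_mul_assoc mat_mat)
  thus ?thesis using assms(2) by simp
qed

lemma cyc: fixes X Y :: mat2 assumes "X ** Y = mat e" "e*e = 1" shows "Y ** X = (mat e :: mat2)"
proof -
  have ee: "mat e ** mat e = (mat 1::mat2)" using mat_mat[of e e] assms(2) by simp
  have "X ** (Y ** mat e) = mat 1" using assms(1) ee by (simp add: matrix_mul_assoc)
  hence "(Y ** mat e) ** X = mat 1" using matrix_left_right_inverse by blast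
  hence "mat e ** (Y ** X) = mat 1" by (simp add: matrix_mul_assoc mat_comm)
  thus ?thesis using mat_inv assms(2) by blast
qed

lemma tr_comm: "tr2 ((A::mat2) ** B) = tr2 (B ** A)"
proof -
  obtain p1 p2 p3 p4 where P: "A = m2 p1 p2 p3 p4" using m2_ex by blast
  obtain q1 q2 q3 q4 where Q: "B = m2 q1 q2 q3 q4" using m2_ex by blast
  show ?thesis unfolding P Q m2_mult m2_tr by (simp add: algebra_simps)
qed

lemma tr_mat: "tr2 (mat e ** (X::mat2)) = e * tr2 X" "tr2 (X ** mat e) = e * tr2 X" "tr2 (mat e) = 2*e"
proof -
  obtain p1 p2 p3 p4 where P: "X = m2 p1 p2 p3 p4" using m2_ex by blast
  show "tr2 (mat e ** X) = e * tr2 X" "tr2 (X ** mat e) = e * tr2 X" unfolding P mat_m2 m2_mult m2_tr by (simp_all add: algebra_simps)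
  show "tr2 (mat e) = 2*e" unfolding mat_m2 m2_tr by simp
qed

lemma det_mat: "det (mat e :: mat2) = e*e" unfolding mat_m2 m2_det by simp

definition adjm :: "mat2 \<Rightarrow> mat2" where "adjm X = m2 (X$2$2) (-X$1$2) (-X$2$1) (X$1$1)"

lemma adjm_props: fixes P Q :: mat2 shows "X ** adjm X = mat (det X)" "det (adjm X) = det X" "tr2 (adjm X) = tr2 X"
   "adjm (P ** Q) = adjm Q ** adjm P"
proof -
  obtain p1 p2 p3 p4 where P: "X = m2 p1 p2 p3 p4" using m2_ex by blast
  show "X ** adjm X = mat (det X)" "det (adjm X) = det X" "tr2 (adjm X) = tr2 X"
    unfolding P adjm_def m2_mult m2_det m2_tr mat_m2 m2_eq m2_nth by (simp_all add: algebra_simps)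
  obtain q1 q2 q3 q4 where Q: "P = m2 q1 q2 q3 q4" using m2_ex by blast
  obtain r1 r2 r3 r4 where R: "Q = m2 r1 r2 r3 r4" using m2_ex by blast
  show "adjm (P ** Q) = adjm Q ** adjm P"
    unfolding Q R adjm_def m2_mult m2_nth m2_eq by (simp add: algebra_simps)
qed

lemma ex_pair: "\<exists>P Q. det P = 1 \<and> det Q = 1 \<and> tr2 P = u \<and> tr2 Q = v \<and> tr2 (P ** Q) = t"
proof -
  obtain \<tau> where tau: "\<tau> \<noteq> 0" "t = \<tau> + 1/\<tau>" using ex_inv by blast
  show ?thesis
    apply (rule exI[of _ "m2 u 1 (-1) 0"], rule exI[of _ "m2 0 (-1/\<tau>) \<tau> v"])
    using tau unfolding m2_det m2_tr m2_mult by simp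
qed



lemma det_prod: "det (A ** B) = det (A::mat2) * det B" by (rule det_mul)

lemma ee_of: "e = 1 \<or> e = -1 \<Longrightarrow> e * e = (1::complex)" by auto

lemma fix_e: "e = 1 \<or> e = -1 \<Longrightarrow> d = e * z \<Longrightarrow> z = e * (d::complex)" by auto

lemma RL1: assumes rep: "is_rep M" and Mi: "M 1 = mat e" and e: "e = 1 \<or> e = -1"
  shows "L1 (tr2 (M 1)) (tr2 (M 2)) (tr2 (M 3)) (tr2 (M 4)) (tr2 (M 1 ** M 2)) (tr2 (M 1 ** M 3)) (tr2 (M 2 ** M 3))"
proof -
  have ee: "e*e = 1" using ee_of[OF e] .
  have dets: "det (M 2) = 1" "det (M 3) = 1" using rep unfolding is_rep_def by auto
  have pr: "M 1 ** M 2 ** M 3 ** M 4 = mat 1" using rep unfolding is_rep_def by auto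
  have "mat e ** ((M 2 ** M 3) ** M 4) = mat 1" using pr Mi by (simp add: matrix_mul_assoc)
  hence "(M 2 ** M 3) ** M 4 = mat e" using mat_inv ee by blast
  hence "tr2 (M 4) = e * tr2 (M 2 ** M 3)" using trinv det_prod dets by simp
  hence "tr2 (M 2 ** M 3) = e * tr2 (M 4)" using fix_e[OF e] by blast
  thus ?thesis unfolding L1_def using e Mi tr_mat by auto
qed

lemma RL2: assumes rep: "is_rep M" and Mi: "M 2 = mat e" and e: "e = 1 \<or> e = -1"
  shows "L2 (tr2 (M 1)) (tr2 (M 2)) (tr2 (M 3)) (tr2 (M 4)) (tr2 (M 1 ** M 2)) (tr2 (M 1 ** M 3)) (tr2 (M 2 ** M 3))"
proof -
  have ee: "e*e = 1" using ee_of[OF e] .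
  have dets: "det (M 1) = 1" "det (M 3) = 1" using rep unfolding is_rep_def by auto
  have pr: "M 1 ** M 2 ** M 3 ** M 4 = mat 1" using rep unfolding is_rep_def by auto
  have c: "M 1 ** M 2 = mat e ** M 1" using Mi mat_comm by simp
  have "mat e ** ((M 1 ** M 3) ** M 4) = mat 1" using pr c by (simp add: matrix_mul_assoc)
  hence "(M 1 ** M 3) ** M 4 = mat e" using mat_inv ee by blast
  hence "tr2 (M 4) = e * tr2 (M 1 ** M 3)" using trinv det_prod dets by simp
  hence "tr2 (M 1 ** M 3) = e * tr2 (M 4)" using fix_e[OF e] by blast
  thus ?thesis unfolding L2_def using e Mi tr_mat by auto
qed

lemma RL3: assumes rep: "is_rep M" and Mi: "M 3 = mat e" and e: "e = 1 \<or> e = -1"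
  shows "L3 (tr2 (M 1)) (tr2 (M 2)) (tr2 (M 3)) (tr2 (M 4)) (tr2 (M 1 ** M 2)) (tr2 (M 1 ** M 3)) (tr2 (M 2 ** M 3))"
proof -
  have ee: "e*e = 1" using ee_of[OF e] .
  have dets: "det (M 1) = 1" "det (M 2) = 1" using rep unfolding is_rep_def by auto
  have pr: "M 1 ** M 2 ** M 3 ** M 4 = mat 1" using rep unfolding is_rep_def by auto
  have c: "M 1 ** M 2 ** M 3 = mat e ** (M 1 ** M 2)" using Mi mat_comm by simp
  have "mat e ** ((M 1 ** M 2) ** M 4) = mat 1" using pr c by (simp add: matrix_mul_assoc)
  hence "(M 1 ** M 2) ** M 4 = mat e" using mat_inv ee by blast
  hence "tr2 (M 4) = e * tr2 (M 1 ** M 2)" using trinv det_prod dets by simp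
  hence "tr2 (M 1 ** M 2) = e * tr2 (M 4)" using fix_e[OF e] by blast
  thus ?thesis unfolding L3_def using e Mi tr_mat by auto
qed

lemma RL4: assumes rep: "is_rep M" and Mi: "M 4 = mat e" and e: "e = 1 \<or> e = -1"
  shows "L4 (tr2 (M 1)) (tr2 (M 2)) (tr2 (M 3)) (tr2 (M 4)) (tr2 (M 1 ** M 2)) (tr2 (M 1 ** M 3)) (tr2 (M 2 ** M 3))"
proof -
  have ee: "e*e = 1" using ee_of[OF e] .
  have dets: "det (M 1) = 1" "det (M 2) = 1" "det (M 3) = 1" using rep unfolding is_rep_def by auto
  have pr: "M 1 ** M 2 ** M 3 ** M 4 = mat 1" using rep unfolding is_rep_def by auto
  have "mat e ** (M 1 ** M 2 ** M 3) = mat 1" using pr Mi mat_comm by simp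
  hence eq: "(M 1 ** M 2) ** M 3 = mat e" using mat_inv ee by blast
  hence "tr2 (M 3) = e * tr2 (M 1 ** M 2)" using trinv det_prod dets by simp
  hence h1: "tr2 (M 1 ** M 2) = e * tr2 (M 3)" using fix_e[OF e] by blast
  have "M 3 ** (M 1 ** M 2) = mat e" using cyc[OF eq ee] .
  hence "(M 3 ** M 1) ** M 2 = mat e" by (simp add: matrix_mul_assoc)
  hence "tr2 (M 2) = e * tr2 (M 3 ** M 1)" using trinv det_prod dets by simp
  hence h2: "tr2 (M 1 ** M 3) = e * tr2 (M 2)" using fix_e[OF e] tr_comm by metis
  have "M 1 ** (M 2 ** M 3) = mat e" using eq by (simp add: matrix_mul_assoc)
  hence "(M 2 ** M 3) ** M 1 = mat e" using cyc ee by blast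
  hence "tr2 (M 1) = e * tr2 (M 2 ** M 3)" using trinv det_prod dets by simp
  hence h3: "tr2 (M 2 ** M 3) = e * tr2 (M 1)" using fix_e[OF e] by blast
  show ?thesis unfolding L4_def using e Mi tr_mat h1 h2 h3 by auto
qed



definition "traces M a b c d x y z \<longleftrightarrow> tr2 (M 1) = a \<and> tr2 (M 2) = b \<and> tr2 (M 3) = c \<and> tr2 (M 4) = d
   \<and> tr2 (M 1 ** M 2) = x \<and> tr2 (M 1 ** M 3) = y \<and> tr2 (M 2 ** M 3) = z"

definition mk4 :: "mat2 \<Rightarrow> mat2 \<Rightarrow> mat2 \<Rightarrow> mat2 \<Rightarrow> nat \<Rightarrow> mat2" where
  "mk4 A B C D = (\<lambda>i. if i = 1 then A else if i = 2 then B else if i = 3 then C else D)"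

lemma mk4_simps[simp]: "mk4 A B C D (Suc 0) = A" "mk4 A B C D 1 = A" "mk4 A B C D 2 = B" "mk4 A B C D 3 = C" "mk4 A B C D 4 = D"
  unfolding mk4_def by simp_all

lemma set4eq: "{1..4::nat} = {1,2,3,4}" by auto
lemma set4: "(\<forall>i\<in>{1..4::nat}. P i) \<longleftrightarrow> P 1 \<and> P 2 \<and> P 3 \<and> P 4"
  unfolding set4eq by simp

lemma is_rep_mk4: "is_rep (mk4 A B C D) \<longleftrightarrow> det A = 1 \<and> det B = 1 \<and> det C = 1 \<and> det D = 1 \<and> A ** B ** C ** D = mat 1"
  unfolding is_rep_def set4 by simp

lemma adj1: "det X = 1 \<Longrightarrow> X ** adjm X = mat 1" using adjm_props(1)[of X] by simp

lemma mat_pm: "e = 1 \<or> e = -1 \<Longrightarrow> mat e = mat 1 \<or> mat e = (- mat 1 :: mat2)"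
  using neg_mat by auto

lemma LR1: assumes "L1 a b c d x y z"
  shows "\<exists>M. is_rep M \<and> (M 1 = mat 1 \<or> M 1 = - mat 1) \<and> traces M a b c d x y z"
proof -
  obtain e where e: "e = 1 \<or> e = -1" "a = 2*e" "x = e*b" "y = e*c" "z = e*d" using assms unfolding L1_def by blast
  have ee: "e*e = 1" using ee_of[OF e(1)] .
  obtain P Q where PQ: "det P = 1" "det Q = 1" "tr2 P = b" "tr2 Q = c" "tr2 (P ** Q) = z" using ex_pair by blast
  define A where "A = adjm (P ** Q)"
  have dPQ: "det (P ** Q) = 1" using PQ det_prod by simp
  have PQA: "(P ** Q) ** A = mat 1" unfolding A_def using adj1[OF dPQ] .
  have "mat e ** P ** Q ** (mat e ** A) = mat e ** ((P ** Q) ** mat e) ** A" by (simp add: matrix_mul_assoc)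
  also have "\<dots> = mat e ** (mat e ** (P ** Q)) ** A" by (simp add: mat_comm)
  also have "\<dots> = (mat e ** mat e) ** ((P ** Q) ** A)" by (simp add: matrix_mul_assoc)
  also have "\<dots> = mat 1" using PQA mat_mat[of e e] ee by simp
  finally have pr: "mat e ** P ** Q ** (mat e ** A) = mat 1" .
  have dA: "det (mat e ** A) = 1" unfolding A_def using det_prod det_mat adjm_props(2) dPQ ee by simp
  have trA: "tr2 (mat e ** A) = d" unfolding A_def using tr_mat adjm_props(3) PQ e ee
    by (metis fix_e mult.assoc mult_1)
  define M where "M = mk4 (mat e) P Q (mat e ** A)"
  have "is_rep M" unfolding M_def is_rep_mk4 using pr dA PQ det_mat[of e] ee by simp
  moreover have "M 1 = mat 1 \<or> M 1 = - mat 1" unfolding M_def using mat_pm[OF e(1)] by simp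
  moreover have "traces M a b c d x y z" unfolding traces_def M_def mk4_simps
    using trA tr_mat(1)[of e] tr_mat(3)[of e] e(2-4) PQ by simp
  ultimately show ?thesis by blast
qed

lemma mid_comm: "(X::mat2) ** (mat e ** Y) = mat e ** (X ** Y)"
  by (metis matrix_mul_assoc mat_comm)

lemma prodlem: assumes "det (P ** Q) = 1" "e*e = 1"
  shows "mat e ** P ** Q ** (mat e ** adjm (P ** Q)) = mat 1"
proof -
  define A where "A = adjm (P ** Q)"
  have h: "mat e ** P ** Q ** mat e = mat e ** (mat e ** P ** Q)" by (rule mat_comm[symmetric])
  have "mat e ** P ** Q ** (mat e ** A) = (mat e ** P ** Q ** mat e) ** A" by (simp add: matrix_mul_assoc)
  also have "\<dots> = (mat e ** (mat e ** P ** Q)) ** A" using h by simp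
  also have "\<dots> = (mat e ** mat e) ** ((P ** Q) ** A)" by (simp add: matrix_mul_assoc)
  also have "\<dots> = mat 1" using adj1[OF assms(1)] mat_mat[of e e] assms(2) unfolding A_def by simp
  finally show ?thesis unfolding A_def .
qed

lemma LR2: assumes "L2 a b c d x y z"
  shows "\<exists>M. is_rep M \<and> (M 2 = mat 1 \<or> M 2 = - mat 1) \<and> traces M a b c d x y z"
proof -
  obtain e where e: "e = 1 \<or> e = -1" "b = 2*e" "x = e*a" "z = e*c" "y = e*d" using assms unfolding L2_def by blast
  have ee: "e*e = 1" using ee_of[OF e(1)] .
  obtain P Q where PQ: "det P = 1" "det Q = 1" "tr2 P = a" "tr2 Q = c" "tr2 (P ** Q) = y" using ex_pair by blast
  define A where "A = adjm (P ** Q)"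
  have dPQ: "det (P ** Q) = 1" using PQ det_prod by simp
  have "P ** mat e ** Q ** (mat e ** A) = mat e ** P ** Q ** (mat e ** A)" by (simp add: mat_comm)
  hence pr: "P ** mat e ** Q ** (mat e ** A) = mat 1" using prodlem[OF dPQ ee] unfolding A_def by simp
  have dA: "det (mat e ** A) = 1" unfolding A_def using det_prod det_mat adjm_props(2) dPQ ee by simp
  have trA: "tr2 (mat e ** A) = d" unfolding A_def using tr_mat adjm_props(3) PQ e ee
    by (metis fix_e mult.assoc mult_1)
  define M where "M = mk4 P (mat e) Q (mat e ** A)"
  have "is_rep M" unfolding M_def is_rep_mk4 using pr dA PQ det_mat[of e] ee by simp
  moreover have "M 2 = mat 1 \<or> M 2 = - mat 1" unfolding M_def using mat_pm[OF e(1)] by simp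
  moreover have "traces M a b c d x y z" unfolding traces_def M_def mk4_simps
    using trA tr_mat(1)[of e] tr_mat(2)[of _ e] tr_mat(3)[of e] e(2-5) PQ by simp
  ultimately show ?thesis by blast
qed

lemma LR3: assumes "L3 a b c d x y z"
  shows "\<exists>M. is_rep M \<and> (M 3 = mat 1 \<or> M 3 = - mat 1) \<and> traces M a b c d x y z"
proof -
  obtain e where e: "e = 1 \<or> e = -1" "c = 2*e" "y = e*a" "z = e*b" "x = e*d" using assms unfolding L3_def by blast
  have ee: "e*e = 1" using ee_of[OF e(1)] .
  obtain P Q where PQ: "det P = 1" "det Q = 1" "tr2 P = a" "tr2 Q = b" "tr2 (P ** Q) = x" using ex_pair by blast
  define A where "A = adjm (P ** Q)"
  have dPQ: "det (P ** Q) = 1" using PQ det_prod by simp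
  have "P ** Q ** mat e ** (mat e ** A) = mat e ** P ** Q ** (mat e ** A)"
    by (metis mat_comm matrix_mul_assoc)
  hence pr: "P ** Q ** mat e ** (mat e ** A) = mat 1" using prodlem[OF dPQ ee] unfolding A_def by simp
  have dA: "det (mat e ** A) = 1" unfolding A_def using det_prod det_mat adjm_props(2) dPQ ee by simp
  have trA: "tr2 (mat e ** A) = d" unfolding A_def using tr_mat adjm_props(3) PQ e ee
    by (metis fix_e mult.assoc mult_1)
  define M where "M = mk4 P Q (mat e) (mat e ** A)"
  have "is_rep M" unfolding M_def is_rep_mk4 using pr dA PQ det_mat[of e] ee by simp
  moreover have "M 3 = mat 1 \<or> M 3 = - mat 1" unfolding M_def using mat_pm[OF e(1)] by simp
  moreover have "traces M a b c d x y z" unfolding traces_def M_def mk4_simps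
    using trA tr_mat(1)[of e] tr_mat(2)[of _ e] tr_mat(3)[of e] e(2-5) PQ by simp
  ultimately show ?thesis by blast
qed

lemma tr_adj: assumes "det P = 1" "det Q = 1"
  shows "tr2 (P ** adjm (P ** Q)) = tr2 Q" "tr2 (Q ** adjm (P ** Q)) = tr2 P"
proof -
  obtain p1 p2 p3 p4 where P: "P = m2 p1 p2 p3 p4" using m2_ex by blast
  obtain q1 q2 q3 q4 where Q: "Q = m2 q1 q2 q3 q4" using m2_ex by blast
  show "tr2 (P ** adjm (P ** Q)) = tr2 Q" "tr2 (Q ** adjm (P ** Q)) = tr2 P"
    using assms unfolding P Q adjm_def m2_mult m2_nth m2_tr m2_det by algebra+
qed

lemma LR4: assumes "L4 a b c d x y z"
  shows "\<exists>M. is_rep M \<and> (M 4 = mat 1 \<or> M 4 = - mat 1) \<and> traces M a b c d x y z"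
proof -
  obtain e where e: "e = 1 \<or> e = -1" "d = 2*e" "x = e*c" "y = e*b" "z = e*a" using assms unfolding L4_def by blast
  have ee: "e*e = 1" using ee_of[OF e(1)] .
  obtain P Q where PQ: "det P = 1" "det Q = 1" "tr2 P = a" "tr2 Q = b" "tr2 (P ** Q) = x" using ex_pair by blast
  define A where "A = adjm (P ** Q)"
  have dPQ: "det (P ** Q) = 1" using PQ det_prod by simp
  have "P ** Q ** (mat e ** A) ** mat e = mat e ** (mat e ** ((P ** Q) ** A))"
    by (metis mat_comm matrix_mul_assoc)
  also have "\<dots> = mat 1" using adj1[OF dPQ] mat_mat[of e e] ee unfolding A_def by (simp add: matrix_mul_assoc)
  finally have pr: "P ** Q ** (mat e ** A) ** mat e = mat 1" .
  have dA: "det (mat e ** A) = 1" unfolding A_def using det_prod det_mat adjm_props(2) dPQ ee by simp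
  have trA: "tr2 (mat e ** A) = c" unfolding A_def using tr_mat adjm_props(3) PQ e ee
    by (metis fix_e mult.assoc mult_1)
  have t1: "tr2 (P ** (mat e ** A)) = y" unfolding A_def mid_comm tr_mat using tr_adj[OF PQ(1,2)] PQ e by simp
  have t2: "tr2 (Q ** (mat e ** A)) = z" unfolding A_def mid_comm tr_mat using tr_adj[OF PQ(1,2)] PQ e by simp
  define M where "M = mk4 P Q (mat e ** A) (mat e)"
  have "is_rep M" unfolding M_def is_rep_mk4 using pr dA PQ det_mat[of e] ee by simp
  moreover have "M 4 = mat 1 \<or> M 4 = - mat 1" unfolding M_def using mat_pm[OF e(1)] by simp
  moreover have "traces M a b c d x y z" unfolding traces_def M_def mk4_simps
    using trA t1 t2 tr_mat(3)[of e] e(2-5) PQ by simp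
  ultimately show ?thesis by blast
qed



lemma mv_smult: "(A::mat2) *v (k *s v) = k *s (A *v v)"
proof -
  obtain p1 p2 p3 p4 where P: "A = m2 p1 p2 p3 p4" using m2_ex by blast
  show ?thesis unfolding P vec_eq_iff forall_2 by (simp add: m2_mv algebra_simps)
qed

lemma vec2_nz: "(v::complex^2) \<noteq> 0 \<Longrightarrow> v$1 \<noteq> 0 \<or> v$2 \<noteq> 0"
  unfolding vec_eq_iff forall_2 by simp

lemma eig_tr: assumes "det (M::mat2) = 1" "v \<noteq> 0" "M *v v = c *s v"
  shows "c \<noteq> 0 \<and> tr2 M = c + 1/c"
proof -
  obtain p q r s where P: "M = m2 p q r s" using m2_ex by blast
  have e1: "p * v$1 + q * v$2 = c * v$1" and e2: "r * v$1 + s * v$2 = c * v$2"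
    using assms(3) unfolding P vec_eq_iff forall_2 m2_mv by auto
  have d: "p * s - q * r = 1" using assms(1) unfolding P m2_det .
  have E1: "(c*c - (p + s)*c + 1) * v$1 = 0" using e1 e2 d by algebra
  have E2: "(c*c - (p + s)*c + 1) * v$2 = 0" using e1 e2 d by algebra
  have E: "c*c - (p + s)*c + 1 = 0" using E1 E2 vec2_nz[OF assms(2)] by auto
  hence c0: "c \<noteq> 0" by auto
  have "p + s = c + 1/c" using E c0 by (simp add: field_simps) (algebra?)
  thus ?thesis using c0 unfolding P m2_tr by simp
qed

lemma prod_eig: assumes "(A::mat2) *v v = a *s v" "B *v v = b *s v"
  shows "(A ** B) *v v = (a*b) *s v"
proof -
  have "(A ** B) *v v = A *v (B *v v)" by (simp add: matrix_vector_mul_assoc)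
  also have "\<dots> = (a*b) *s v" using assms by (simp add: mv_smult vector_smult_assoc mult.commute)
  finally show ?thesis .
qed

lemma RepRed: assumes rep: "is_rep M" and red: "reducible_rep M"
  shows "Red (tr2 (M 1)) (tr2 (M 2)) (tr2 (M 3)) (tr2 (M 4)) (tr2 (M 1 ** M 2)) (tr2 (M 1 ** M 3)) (tr2 (M 2 ** M 3))"
proof -
  obtain v where v: "v \<noteq> 0" "\<forall>i\<in>{1..4}. \<exists>c. M i *v v = c *s v" using red unfolding reducible_rep_def by blast
  obtain c1 where c1: "M 1 *v v = c1 *s v" using v(2) unfolding set4 by blast
  obtain c2 where c2: "M 2 *v v = c2 *s v" using v(2) unfolding set4 by blast
  obtain c3 where c3: "M 3 *v v = c3 *s v" using v(2) unfolding set4 by blast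
  obtain c4 where c4: "M 4 *v v = c4 *s v" using v(2) unfolding set4 by blast
  have dets: "det (M 1) = 1" "det (M 2) = 1" "det (M 3) = 1" "det (M 4) = 1" using rep unfolding is_rep_def set4 by auto
  have pr: "M 1 ** M 2 ** M 3 ** M 4 = mat 1" using rep unfolding is_rep_def by auto
  have t1: "c1 \<noteq> 0" "tr2 (M 1) = c1 + 1/c1" using eig_tr[OF dets(1) v(1) c1] by auto
  have t2: "c2 \<noteq> 0" "tr2 (M 2) = c2 + 1/c2" using eig_tr[OF dets(2) v(1) c2] by auto
  have t3: "c3 \<noteq> 0" "tr2 (M 3) = c3 + 1/c3" using eig_tr[OF dets(3) v(1) c3] by auto
  have t4: "c4 \<noteq> 0" "tr2 (M 4) = c4 + 1/c4" using eig_tr[OF dets(4) v(1) c4] by auto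
  have t12: "tr2 (M 1 ** M 2) = c1*c2 + 1/(c1*c2)"
    using eig_tr[OF _ v(1) prod_eig[OF c1 c2]] dets det_prod by simp
  have t13: "tr2 (M 1 ** M 3) = c1*c3 + 1/(c1*c3)"
    using eig_tr[OF _ v(1) prod_eig[OF c1 c3]] dets det_prod by simp
  have t23: "tr2 (M 2 ** M 3) = c2*c3 + 1/(c2*c3)"
    using eig_tr[OF _ v(1) prod_eig[OF c2 c3]] dets det_prod by simp
  have "(M 1 ** M 2 ** M 3 ** M 4) *v v = (c1*c2*c3*c4) *s v"
    using prod_eig[OF prod_eig[OF prod_eig[OF c1 c2] c3] c4] .
  hence "(c1*c2*c3*c4) *s v = 1 *s v" using pr by simp
  hence "c1*c2*c3*c4 = 1" using v(1) by (metis vec2_nz vector_smult_component mult_right_cancel)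
  hence c4e: "c4 = 1/(c1*c2*c3)" using t1(1) t2(1) t3(1) by (simp add: field_simps)
  have "tr2 (M 4) = c1*c2*c3 + 1/(c1*c2*c3)" using t4(2) c4e by simp
  thus ?thesis unfolding Red_def using t1 t2 t3 t12 t13 t23 by blast
qed

definition dg :: "complex \<Rightarrow> mat2" where "dg t = m2 t 0 0 (1/t)"

lemma RedRep: assumes "Red a b c d x y z"
  shows "\<exists>M. is_rep M \<and> reducible_rep M \<and> traces M a b c d x y z"
proof -
  obtain \<alpha> \<beta> \<gamma> where h: "\<alpha> \<noteq> 0" "\<beta> \<noteq> 0" "\<gamma> \<noteq> 0"
   "a = \<alpha> + 1/\<alpha>" "b = \<beta> + 1/\<beta>" "c = \<gamma> + 1/\<gamma>" "d = \<alpha>*\<beta>*\<gamma> + 1/(\<alpha>*\<beta>*\<gamma>)"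
   "x = \<alpha>*\<beta> + 1/(\<alpha>*\<beta>)" "y = \<alpha>*\<gamma> + 1/(\<alpha>*\<gamma>)" "z = \<beta>*\<gamma> + 1/(\<beta>*\<gamma>)"
    using assms unfolding Red_def by blast
  define M where "M = mk4 (dg \<alpha>) (dg \<beta>) (dg \<gamma>) (dg (1/(\<alpha>*\<beta>*\<gamma>)))"
  have "is_rep M" unfolding M_def is_rep_mk4 dg_def m2_det m2_mult mat_m2 m2_eq using h(1-3) by (simp add: field_simps)
  moreover have "reducible_rep M" unfolding reducible_rep_def
  proof (intro exI[of _ "vector [1, 0] :: complex^2"] conjI ballI)
    show "(vector [1, 0] :: complex^2) \<noteq> 0" unfolding vec_eq_iff forall_2 by simp
    fix i :: nat assume "i \<in> {1..4}"
    have "i = 1 \<or> i = 2 \<or> i = 3 \<or> i = 4" using \<open>i \<in> {1..4}\<close> unfolding set4eq by auto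
    thus "\<exists>k. M i *v vector [1, 0] = k *s vector [1, 0]"
      by (intro exI[of _ "M i $ 1 $ 1"]) (auto simp: M_def dg_def vec_eq_iff forall_2 m2_mv)
  qed
  moreover have "traces M a b c d x y z" unfolding traces_def M_def mk4_simps dg_def m2_tr m2_mult
    using h by (simp add: field_simps)
  ultimately show ?thesis by blast
qed



lemma cheb_chain[derivative_intros]:
  "(f has_field_derivative f') (at x within s) \<Longrightarrow>
   ((\<lambda>x. cheb n (f x)) has_field_derivative chebd n (f x) * f') (at x within s)"
  using DERIV_chain2[OF cheb_deriv] by blast

lemma Zfun_Fp: "Zfun N z0 z1 zi w = Fp (- cheb N (w 1)) (- cheb N (w 2)) (- cheb N (w 3)) (- cheb N (w 4)) (-z0) (-z1) (-zi)"
  unfolding Zfun_def Hpoly_def Fp_def Let_def by (simp add: algebra_simps power2_eq_square)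

lemma dz0: "((\<lambda>t. Zfun N t z1 zi w) has_field_derivative
   - Fx (- cheb N (w 1)) (- cheb N (w 2)) (- cheb N (w 3)) (- cheb N (w 4)) (-z0) (-z1) (-zi)) (at z0)"
  unfolding Zfun_def Hpoly_def Fx_def Let_def
  by (auto intro!: derivative_eq_intros simp: algebra_simps power2_eq_square)

lemma dz1: "((\<lambda>t. Zfun N z0 t zi w) has_field_derivative
   - Fy (- cheb N (w 1)) (- cheb N (w 2)) (- cheb N (w 3)) (- cheb N (w 4)) (-z0) (-z1) (-zi)) (at z1)"
  unfolding Zfun_def Hpoly_def Fy_def Let_def
  by (auto intro!: derivative_eq_intros simp: algebra_simps power2_eq_square)

lemma dzi: "((\<lambda>t. Zfun N z0 z1 t w) has_field_derivative
   - Fz (- cheb N (w 1)) (- cheb N (w 2)) (- cheb N (w 3)) (- cheb N (w 4)) (-z0) (-z1) (-zi)) (at zi)"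
  unfolding Zfun_def Hpoly_def Fz_def Let_def
  by (auto intro!: derivative_eq_intros simp: algebra_simps power2_eq_square)

lemma dw1: "((\<lambda>t. Zfun N z0 z1 zi (w(1 := t))) has_field_derivative
   - Fa (- cheb N (w 1)) (- cheb N (w 2)) (- cheb N (w 3)) (- cheb N (w 4)) (-z0) (-z1) (-zi) * chebd N (w 1)) (at (w 1))"
  unfolding Zfun_def Hpoly_def Fa_def Let_def
  by (auto intro!: derivative_eq_intros simp: algebra_simps power2_eq_square)

lemma dw2: "((\<lambda>t. Zfun N z0 z1 zi (w(2 := t))) has_field_derivative
   - Fb (- cheb N (w 1)) (- cheb N (w 2)) (- cheb N (w 3)) (- cheb N (w 4)) (-z0) (-z1) (-zi) * chebd N (w 2)) (at (w 2))"
  unfolding Zfun_def Hpoly_def Fb_def Let_def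
  by (auto intro!: derivative_eq_intros simp: algebra_simps power2_eq_square)

lemma dw3: "((\<lambda>t. Zfun N z0 z1 zi (w(3 := t))) has_field_derivative
   - Fc (- cheb N (w 1)) (- cheb N (w 2)) (- cheb N (w 3)) (- cheb N (w 4)) (-z0) (-z1) (-zi) * chebd N (w 3)) (at (w 3))"
  unfolding Zfun_def Hpoly_def Fc_def Let_def
  by (auto intro!: derivative_eq_intros simp: algebra_simps power2_eq_square)

lemma dw4: "((\<lambda>t. Zfun N z0 z1 zi (w(4 := t))) has_field_derivative
   - Fd (- cheb N (w 1)) (- cheb N (w 2)) (- cheb N (w 3)) (- cheb N (w 4)) (-z0) (-z1) (-zi) * chebd N (w 4)) (at (w 4))"
  unfolding Zfun_def Hpoly_def Fd_def Let_def
  by (auto intro!: derivative_eq_intros simp: algebra_simps power2_eq_square)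



lemma deriv0_iff: "(f has_field_derivative D) (at x) \<Longrightarrow> (f has_field_derivative 0) (at x) \<longleftrightarrow> D = 0"
  using DERIV_unique by blast

lemma ordN_pos: assumes "root_of_unity q" shows "ordN q > 0"
proof -
  obtain n :: nat where n: "n > 0" "q^n = 1" using assms unfolding root_of_unity_def by blast
  have "(q^4)^n = 1" using n(2) by (metis power_mult mult.commute power_one)
  hence "\<exists>k::nat. k > 0 \<and> (q^4)^k = 1" using n(1) by blast
  thus ?thesis unfolding ordN_def by (rule LeastI2_ex) auto
qed

lemma sing_iff:
  fixes N z0 z1 zi w
  defines "a \<equiv> - cheb N (w 1)" and "b \<equiv> - cheb N (w 2)" and "c \<equiv> - cheb N (w 3)" and "d \<equiv> - cheb N (w 4)"
    and "x \<equiv> -z0" and "y \<equiv> -z1" and "z \<equiv> -zi"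
  shows "singular_Z N z0 z1 zi w \<longleftrightarrow> Fp a b c d x y z = 0 \<and> Fx a b c d x y z = 0 \<and> Fy a b c d x y z = 0
     \<and> Fz a b c d x y z = 0 \<and> Fa a b c d x y z * chebd N (w 1) = 0 \<and> Fb a b c d x y z * chebd N (w 2) = 0
     \<and> Fc a b c d x y z * chebd N (w 3) = 0 \<and> Fd a b c d x y z * chebd N (w 4) = 0"
proof -
  have "(\<forall>i\<in>{1..4}. ((\<lambda>t. Zfun N z0 z1 zi (w(i := t))) has_field_derivative 0) (at (w i))) \<longleftrightarrow>
     Fa a b c d x y z * chebd N (w 1) = 0 \<and> Fb a b c d x y z * chebd N (w 2) = 0
     \<and> Fc a b c d x y z * chebd N (w 3) = 0 \<and> Fd a b c d x y z * chebd N (w 4) = 0"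
    unfolding set4 using deriv0_iff[OF dw1] deriv0_iff[OF dw2] deriv0_iff[OF dw3] deriv0_iff[OF dw4]
    unfolding assms by simp
  note h2 = this
  have h1: "Zfun N z0 z1 zi w = 0 \<longleftrightarrow> Fp a b c d x y z = 0" unfolding Zfun_Fp assms ..
  show ?thesis unfolding singular_Z_def inZ_def h1 h2 deriv0_iff[OF dz0] deriv0_iff[OF dz1] deriv0_iff[OF dzi]
    neg_equal_0_iff_equal unfolding assms by (rule refl)
qed

lemma char_iff:
  fixes N z0 z1 zi w M
  defines "a \<equiv> - cheb N (w 1)" and "b \<equiv> - cheb N (w 2)" and "c \<equiv> - cheb N (w 3)" and "d \<equiv> - cheb N (w 4)"
    and "x \<equiv> -z0" and "y \<equiv> -z1" and "z \<equiv> -zi"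
  shows "character_of N z0 z1 zi w M \<longleftrightarrow> traces M a b c d x y z"
  unfolding character_of_def traces_def set4 assms by auto

lemma Lcase_fwd:
  assumes N0: "N > 0" and Li: "Li a b c d x y z" and Fi: "Fi a b c d x y z * chebd N (w k) = 0"
    and LRed: "Li a b c d x y z \<Longrightarrow> Fi a b c d x y z = 0 \<Longrightarrow> Red a b c d x y z"
    and LR: "Li a b c d x y z \<Longrightarrow> \<exists>M. is_rep M \<and> (M k = mat 1 \<or> M k = - mat 1) \<and> traces M a b c d x y z"
  shows "Red a b c d x y z \<or> (\<exists>M. is_rep M \<and> (M k = mat 1 \<or> M k = - mat 1) \<and> traces M a b c d x y z \<and> w k \<noteq> 2 \<and> w k \<noteq> -2)"
proof (cases "chebd N (w k) = 0")
  case True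
  hence "w k \<noteq> 2 \<and> w k \<noteq> -2" using C1[OF N0] by blast
  thus ?thesis using LR[OF Li] by blast
next
  case False
  hence "Fi a b c d x y z = 0" using Fi by simp
  thus ?thesis using LRed Li by blast
qed

theorem mainTheorem16:
  fixes q :: complex and z0 z1 zi :: complex and w :: "nat \<Rightarrow> complex"
  assumes "root_of_unity q"
    and "inZ (ordN q) z0 z1 zi w"
  shows "singular_Z (ordN q) z0 z1 zi w \<longleftrightarrow>
    ((\<exists>i\<in>{1..4}. \<exists>M. is_rep M \<and> (M i = mat 1 \<or> M i = - mat 1)
        \<and> character_of (ordN q) z0 z1 zi w M \<and> w i \<noteq> 2 \<and> w i \<noteq> -2)
     \<or> (\<exists>M. is_rep M \<and> reducible_rep M \<and> character_of (ordN q) z0 z1 zi w M))"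
proof -
  define N where "N = ordN q"
  have N0: "N > 0" using ordN_pos[OF assms(1)] unfolding N_def .
  define a where "a = - cheb N (w 1)"
  define b where "b = - cheb N (w 2)"
  define c where "c = - cheb N (w 3)"
  define d where "d = - cheb N (w 4)"
  define x where "x = - z0"
  define y where "y = - z1"
  define z where "z = - zi"
  have S: "singular_Z N z0 z1 zi w \<longleftrightarrow> Fp a b c d x y z = 0 \<and> Fx a b c d x y z = 0 \<and> Fy a b c d x y z = 0
     \<and> Fz a b c d x y z = 0 \<and> Fa a b c d x y z * chebd N (w 1) = 0 \<and> Fb a b c d x y z * chebd N (w 2) = 0
     \<and> Fc a b c d x y z * chebd N (w 3) = 0 \<and> Fd a b c d x y z * chebd N (w 4) = 0"
    unfolding a_def b_def c_def d_def x_def y_def z_def by (rule sing_iff)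
  have C: "character_of N z0 z1 zi w M \<longleftrightarrow> traces M a b c d x y z" for M
    unfolding a_def b_def c_def d_def x_def y_def z_def by (rule char_iff)
  have Fp0: "Fp a b c d x y z = 0" using assms(2) unfolding inZ_def Zfun_Fp N_def[symmetric]
    a_def b_def c_def d_def x_def y_def z_def .
  have trR: "traces M a b c d x y z \<Longrightarrow> Red (tr2 (M 1)) (tr2 (M 2)) (tr2 (M 3)) (tr2 (M 4)) (tr2 (M 1 ** M 2)) (tr2 (M 1 ** M 3)) (tr2 (M 2 ** M 3)) \<longleftrightarrow> Red a b c d x y z" for M
    unfolding traces_def by simp
  have red2: "Red a b c d x y z \<Longrightarrow> (\<exists>M. is_rep M \<and> reducible_rep M \<and> character_of N z0 z1 zi w M)"
    using RedRep C by blast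
  show ?thesis unfolding N_def[symmetric]
  proof
    assume "singular_Z N z0 z1 zi w"
    hence F: "Fp a b c d x y z = 0" "Fx a b c d x y z = 0" "Fy a b c d x y z = 0" "Fz a b c d x y z = 0"
      and P: "Fa a b c d x y z * chebd N (w 1) = 0" "Fb a b c d x y z * chebd N (w 2) = 0"
      "Fc a b c d x y z * chebd N (w 3) = 0" "Fd a b c d x y z * chebd N (w 4) = 0" using S by auto
    have G: "Good a b c d x y z" using GoodAll[OF F] .
    have one: "\<exists>M. is_rep M \<and> (M k = mat 1 \<or> M k = - mat 1) \<and> traces M a b c d x y z \<and> w k \<noteq> 2 \<and> w k \<noteq> -2 \<Longrightarrow> k \<in> {1..4} \<Longrightarrow>
      (\<exists>i\<in>{1..4}. \<exists>M. is_rep M \<and> (M i = mat 1 \<or> M i = - mat 1) \<and> character_of N z0 z1 zi w M \<and> w i \<noteq> 2 \<and> w i \<noteq> -2)" for k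
      using C by blast
    show "(\<exists>i\<in>{1..4}. \<exists>M. is_rep M \<and> (M i = mat 1 \<or> M i = - mat 1) \<and> character_of N z0 z1 zi w M \<and> w i \<noteq> 2 \<and> w i \<noteq> -2)
     \<or> (\<exists>M. is_rep M \<and> reducible_rep M \<and> character_of N z0 z1 zi w M)"
    proof -
      have "Red a b c d x y z \<or> L1 a b c d x y z \<or> L2 a b c d x y z \<or> L3 a b c d x y z \<or> L4 a b c d x y z"
        using G unfolding Good_def .
      moreover
      { assume h: "L1 a b c d x y z"
        have "Red a b c d x y z \<or> (\<exists>M. is_rep M \<and> (M 1 = mat 1 \<or> M 1 = - mat 1) \<and> traces M a b c d x y z \<and> w 1 \<noteq> 2 \<and> w 1 \<noteq> -2)"
          by (rule Lcase_fwd[where Li=L1 and Fi=Fa and k=1 and w=w, OF N0 h P(1) LRed1 LR1])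
        hence ?thesis
        proof
          assume "Red a b c d x y z" thus ?thesis using red2 by blast
        next
          assume "\<exists>M. is_rep M \<and> (M 1 = mat 1 \<or> M 1 = - mat 1) \<and> traces M a b c d x y z \<and> w 1 \<noteq> 2 \<and> w 1 \<noteq> -2"
          moreover have "(1::nat) \<in> {1..4}" by simp
          ultimately show ?thesis using one by blast
        qed }
      moreover
      { assume h: "L2 a b c d x y z"
        have "Red a b c d x y z \<or> (\<exists>M. is_rep M \<and> (M 2 = mat 1 \<or> M 2 = - mat 1) \<and> traces M a b c d x y z \<and> w 2 \<noteq> 2 \<and> w 2 \<noteq> -2)"
          by (rule Lcase_fwd[where Li=L2 and Fi=Fb and k=2 and w=w, OF N0 h P(2) LRed2 LR2])
        hence ?thesis
        proof
          assume "Red a b c d x y z" thus ?thesis using red2 by blast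
        next
          assume "\<exists>M. is_rep M \<and> (M 2 = mat 1 \<or> M 2 = - mat 1) \<and> traces M a b c d x y z \<and> w 2 \<noteq> 2 \<and> w 2 \<noteq> -2"
          moreover have "(2::nat) \<in> {1..4}" by simp
          ultimately show ?thesis using one by blast
        qed }
      moreover
      { assume h: "L3 a b c d x y z"
        have "Red a b c d x y z \<or> (\<exists>M. is_rep M \<and> (M 3 = mat 1 \<or> M 3 = - mat 1) \<and> traces M a b c d x y z \<and> w 3 \<noteq> 2 \<and> w 3 \<noteq> -2)"
          by (rule Lcase_fwd[where Li=L3 and Fi=Fc and k=3 and w=w, OF N0 h P(3) LRed3 LR3])
        hence ?thesis
        proof
          assume "Red a b c d x y z" thus ?thesis using red2 by blast
        next
          assume "\<exists>M. is_rep M \<and> (M 3 = mat 1 \<or> M 3 = - mat 1) \<and> traces M a b c d x y z \<and> w 3 \<noteq> 2 \<and> w 3 \<noteq> -2"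
          moreover have "(3::nat) \<in> {1..4}" by simp
          ultimately show ?thesis using one by blast
        qed }
      moreover
      { assume h: "L4 a b c d x y z"
        have "Red a b c d x y z \<or> (\<exists>M. is_rep M \<and> (M 4 = mat 1 \<or> M 4 = - mat 1) \<and> traces M a b c d x y z \<and> w 4 \<noteq> 2 \<and> w 4 \<noteq> -2)"
          by (rule Lcase_fwd[where Li=L4 and Fi=Fd and k=4 and w=w, OF N0 h P(4) LRed4 LR4])
        hence ?thesis
        proof
          assume "Red a b c d x y z" thus ?thesis using red2 by blast
        next
          assume "\<exists>M. is_rep M \<and> (M 4 = mat 1 \<or> M 4 = - mat 1) \<and> traces M a b c d x y z \<and> w 4 \<noteq> 2 \<and> w 4 \<noteq> -2"
          moreover have "(4::nat) \<in> {1..4}" by simp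
          ultimately show ?thesis using one by blast
        qed }
      ultimately show ?thesis using red2 by blast
    qed
  next
    assume R: "(\<exists>i\<in>{1..4}. \<exists>M. is_rep M \<and> (M i = mat 1 \<or> M i = - mat 1) \<and> character_of N z0 z1 zi w M \<and> w i \<noteq> 2 \<and> w i \<noteq> -2)
     \<or> (\<exists>M. is_rep M \<and> reducible_rep M \<and> character_of N z0 z1 zi w M)"
    show "singular_Z N z0 z1 zi w"
      using R
    proof
      assume "\<exists>M. is_rep M \<and> reducible_rep M \<and> character_of N z0 z1 zi w M"
      then obtain M where M: "is_rep M" "reducible_rep M" "traces M a b c d x y z" using C by blast
      have "Red a b c d x y z" using RepRed[OF M(1,2)] trR[OF M(3)] by simp
      thus ?thesis using RedZ S by simp
    next
      assume "\<exists>i\<in>{1..4}. \<exists>M. is_rep M \<and> (M i = mat 1 \<or> M i = - mat 1) \<and> character_of N z0 z1 zi w M \<and> w i \<noteq> 2 \<and> w i \<noteq> -2"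
      then obtain i M where i: "i \<in> {1..4}" and M: "is_rep M" "M i = mat 1 \<or> M i = - mat 1" "traces M a b c d x y z"
        and wi: "w i \<noteq> 2" "w i \<noteq> -2" using C by blast
      obtain e where e: "e = 1 \<or> e = -1" "M i = mat e" using M(2) neg_mat by auto
      have tre: "tr2 (M i) = 2*e" using e(2) tr_mat(3) by simp
      have chi: "chebd N (w i) = 0"
      proof (rule C2[OF _ wi])
        have "i = 1 \<or> i = 2 \<or> i = 3 \<or> i = 4" using i unfolding set4eq by auto
        hence "cheb N (w i) = - tr2 (M i)" using M(3) unfolding traces_def a_def b_def c_def d_def by auto
        thus "cheb N (w i) = 2 \<or> cheb N (w i) = -2" using tre e(1) by auto
      qed
      have tM: "tr2 (M 1) = a" "tr2 (M 2) = b" "tr2 (M 3) = c" "tr2 (M 4) = d"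
        "tr2 (M 1 ** M 2) = x" "tr2 (M 1 ** M 3) = y" "tr2 (M 2 ** M 3) = z" using M(3) unfolding traces_def by auto
      have "i = 1 \<or> i = 2 \<or> i = 3 \<or> i = 4" using i unfolding set4eq by auto
      moreover
      { assume i1: "i = 1"
        have "L1 a b c d x y z" using RL1[OF M(1) _ e(1)] e(2) i1 tM by simp
        hence ?thesis using L1Z S Fp0 chi i1 by simp }
      moreover
      { assume i1: "i = 2"
        have "L2 a b c d x y z" using RL2[OF M(1) _ e(1)] e(2) i1 tM by simp
        hence ?thesis using L2Z S Fp0 chi i1 by simp }
      moreover
      { assume i1: "i = 3"
        have "L3 a b c d x y z" using RL3[OF M(1) _ e(1)] e(2) i1 tM by simp
        hence ?thesis using L3Z S Fp0 chi i1 by simp }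
      moreover
      { assume i1: "i = 4"
        have "L4 a b c d x y z" using RL4[OF M(1) _ e(1)] e(2) i1 tM by simp
        hence ?thesis using L4Z S Fp0 chi i1 by simp }
      ultimately show ?thesis by blast
    qed
  qed
qed


end
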